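(* In the setting below (Algorithm 2), (i) for every agent $i$ and every strategy $f_i$, $\mathbb E[L_i(\mathrm{id},\dots,\mathrm{id})]\le\mathbb E[L_i(f_i,(\mathrm{id})_{j\ne i})]$; (ii) if there is a feature $k\in[K]$ for which $\Pi$ is not degenerate, then, when all agents are truthful, for every agent $i$, fixed sample sizes $(n_j)_{j\neq i}$ and all $n_i<n_i'$, agent $i$'s expected loss when holding and truthfully submitting $n_i'$ points is strictly smaller than when holding $n_i$ points.
   Context: Setting (Algorithm 2). Fix $m\ge2$ agents and a measurable data space $\mathcal X$. A prior $\Pi$ is a probability distribution on the set of probability distributions on $\mathcal X$. $D\sim\Pi$ is drawn; conditionally on $D$, agent $i$ holds $X_i=(X_{i,1},\dots,X_{i,n_i})$ with entries i.i.d. from $D$, independent across agents (regard $X_{i,1},X_{i,2},\dots$ as an infinite conditionally i.i.d. sequence). A strategy is a measurable map $f:\bigcup_{\ell\ge0}\mathcal X^\ell\to\bigcup_{\ell\ge0}\mathcal X^\ell$; agent $i$ submits $X_i'=f_i(X_i)$; $\mathrm{id}$ is the identity (truthful) strategy. Feature maps $\varphi_1,\dots,\varphi_K:\mathcal X\to\mathbb R$ are measurable. For a finite nonempty multiset $S\subset\mathbb R$, $F_S(t)=\frac1{|S|}\sum_{s\in S}\mathbf 1\{s\le t\}$, and $\varphi_k(S')=\{\varphi_k(x):x\in S'\}$ for $S'\subset\mathcal X$. For $k\in[K]$, $j\ge0$, $r\ge1$ let $h^{(k)}_{j,r}:\mathcal X^j\times\mathbb R\to[0,1]$ be measurable such that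 whenever $D\sim\Pi$ and, conditionally on $D$, $Y_1,\dots,Y_j,T,Z_1,\dots,Z_r$ are i.i.d. from $D$, $h^{(k)}_{j,r}(Y_1,\dots,Y_j,\varphi_k(T))=\mathbb E[F_{\varphi_k(\{Z_1,\dots,Z_r\})}(\varphi_k(T))\mid Y_1,\dots,Y_j,\varphi_k(T)]$ a.s. Mechanism: for each $i$, $X'_{-i}=\bigcup_{j\neq i}X'_j$ (multiset, at least 2 elements), $T_i$ uniformly random from $X'_{-i}$, $Z_i=X'_{-i}\setminus\{T_i\}$, and $L_i=\frac1K\sum_{k=1}^K\big(h^{(k)}_{|X_i'|,|Z_i|}(X_i',\varphi_k(T_i))-F_{\varphi_k(Z_i)}(\varphi_k(T_i))\big)^2$. $L_i(f_1,\dots,f_m)$ is the loss under strategies $f_j$. Expectations are over $D\sim\Pi$, data, and all randomness. Degenerate for feature $k$: with $D\sim\Pi$ and, conditionally on $D$, $X_1,X_2,\dots,T,Z$ i.i.d. from $D$, $\Pi$ is degenerate for feature $k$ if for some $n\in\mathbb N$, $P(\varphi_k(Z)\le\varphi_k(T)\mid\varphi_k(T),X_1,\dots,X_n)=P(\varphi_k(Z)\le\varphi_k(T)\mid\varphi_k(T),X_1,\dots,X_{n+1})$ almost surely. *)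

theory Defs
  imports "HOL-Probability.Probability"
begin

text \<open>The measurable space of finite sequences (disjoint union over lengths l of the
  product spaces M^l), represented by lists.\<close>
definition listM :: "'a measure \<Rightarrow> 'a list measure" where
  "listM M = sigma (lists (space M))
     (\<Union>n. {{xs \<in> lists (space M). length xs = n \<and> (\<lambda>i\<in>{..<n}. xs ! i) \<in> A} | A.
            A \<in> sets (PiM {..<n} (\<lambda>_. M))})"

definition ecdf :: "real list \<Rightarrow> real \<Rightarrow> real" where
  "ecdf S t = real (length (filter (\<lambda>s. s \<le> t) S)) / real (length S)"

definition remove_nth :: "nat \<Rightarrow> 'a list \<Rightarrow> 'a list" where
  "remove_nth p ys = take p ys @ drop (Suc p) ys"

text \<open>Loss of an agent submitting xs when the others' pooled submissions are ys,
  averaged over the uniformly random choice of T among the entries of ys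
  (T = ys!p, Z = ys with position p removed).\<close>
definition mech_loss ::
  "nat \<Rightarrow> (nat \<Rightarrow> 'a \<Rightarrow> real) \<Rightarrow> (nat \<Rightarrow> nat \<Rightarrow> nat \<Rightarrow> 'a list \<Rightarrow> real \<Rightarrow> real)
     \<Rightarrow> 'a list \<Rightarrow> 'a list \<Rightarrow> real" where
  "mech_loss K \<phi> h xs ys =
     (1 / real (length ys)) * (\<Sum>p<length ys.
        (1 / real K) * (\<Sum>k<K.
          (h k (length xs) (length ys - 1) xs (\<phi> k (ys ! p))
           - ecdf (map (\<phi> k) (remove_nth p ys)) (\<phi> k (ys ! p)))\<^sup>2))"

text \<open>D ~ Prior, then conditionally on D the coordinates (j,l), j < m, l < n j, are i.i.d. from D;
  coordinate (j,l) is the l-th data point of agent j.\<close>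
definition data_measure :: "'a measure measure \<Rightarrow> nat \<Rightarrow> (nat \<Rightarrow> nat) \<Rightarrow> (nat \<times> nat \<Rightarrow> 'a) measure" where
  "data_measure Prior m n = Prior \<bind> (\<lambda>D. PiM {(j, l). j < m \<and> l < n j} (\<lambda>_. D))"

definition agent_data :: "(nat \<Rightarrow> nat) \<Rightarrow> nat \<Rightarrow> (nat \<times> nat \<Rightarrow> 'a) \<Rightarrow> 'a list" where
  "agent_data n j \<omega> = map (\<lambda>l. \<omega> (j, l)) [0..<n j]"

definition others_sub ::
  "nat \<Rightarrow> (nat \<Rightarrow> 'a list \<Rightarrow> 'a list) \<Rightarrow> (nat \<Rightarrow> nat) \<Rightarrow> nat \<Rightarrow> (nat \<times> nat \<Rightarrow> 'a) \<Rightarrow> 'a list" where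
  "others_sub m f n i \<omega> = concat (map (\<lambda>j. f j (agent_data n j \<omega>)) (filter (\<lambda>j. j \<noteq> i) [0..<m]))"

definition expected_loss ::
  "'a measure measure \<Rightarrow> nat \<Rightarrow> (nat \<Rightarrow> 'a \<Rightarrow> real) \<Rightarrow> (nat \<Rightarrow> nat \<Rightarrow> nat \<Rightarrow> 'a list \<Rightarrow> real \<Rightarrow> real)
     \<Rightarrow> nat \<Rightarrow> (nat \<Rightarrow> 'a list \<Rightarrow> 'a list) \<Rightarrow> (nat \<Rightarrow> nat) \<Rightarrow> nat \<Rightarrow> real" where
  "expected_loss Prior K \<phi> h m f n i =
     (\<integral>\<omega>. mech_loss K \<phi> h (f i (agent_data n i \<omega>)) (others_sub m f n i \<omega>) \<partial>data_measure Prior m n)"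

text \<open>Joint law of (Y_1..Y_j, T, Z_1..Z_r): D ~ Prior, then i.i.d. from D;
  coordinates 0..j-1 are Y, coordinate j is T, coordinates j+1..j+r are Z.\<close>
definition h_space :: "'a measure measure \<Rightarrow> nat \<Rightarrow> nat \<Rightarrow> (nat \<Rightarrow> 'a) measure" where
  "h_space Prior j r = Prior \<bind> (\<lambda>D. PiM {..<j + 1 + r} (\<lambda>_. D))"

definition valid_h ::
  "'a measure \<Rightarrow> 'a measure measure \<Rightarrow> nat \<Rightarrow> (nat \<Rightarrow> 'a \<Rightarrow> real)
     \<Rightarrow> (nat \<Rightarrow> nat \<Rightarrow> nat \<Rightarrow> 'a list \<Rightarrow> real \<Rightarrow> real) \<Rightarrow> bool" where
  "valid_h M Prior K \<phi> h \<longleftrightarrow>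
    (\<forall>k<K. \<forall>j r. 1 \<le> r \<longrightarrow>
       (\<lambda>(xs, t). h k j r xs t) \<in> borel_measurable (listM M \<Otimes>\<^sub>M borel)
     \<and> (\<forall>xs t. xs \<in> lists (space M) \<longrightarrow> length xs = j \<longrightarrow> h k j r xs t \<in> {0..1})
     \<and> (AE \<omega> in h_space Prior j r.
          h k j r (map \<omega> [0..<j]) (\<phi> k (\<omega> j)) =
          real_cond_exp (h_space Prior j r)
            (vimage_algebra (space (h_space Prior j r))
               (\<lambda>\<omega>. (map \<omega> [0..<j], \<phi> k (\<omega> j))) (listM M \<Otimes>\<^sub>M borel))
            (\<lambda>\<omega>. ecdf (map (\<phi> k) (map \<omega> [j + 1..<j + 1 + r])) (\<phi> k (\<omega> j))) \<omega>))"

text \<open>D ~ Prior, then an i.i.d. sequence from D; coordinate 0 is T, coordinate 1 is Z,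
  coordinate l+1 is X_l (l >= 1).\<close>
definition seq_space :: "'a measure measure \<Rightarrow> (nat \<Rightarrow> 'a) measure" where
  "seq_space Prior = Prior \<bind> (\<lambda>D. PiM UNIV (\<lambda>_. D))"

definition cond_sigma :: "'a measure \<Rightarrow> 'a measure measure \<Rightarrow> ('a \<Rightarrow> real) \<Rightarrow> nat \<Rightarrow> (nat \<Rightarrow> 'a) measure" where
  "cond_sigma M Prior \<phi>k n = vimage_algebra (space (seq_space Prior))
      (\<lambda>\<omega>. (\<phi>k (\<omega> 0), map \<omega> [2..<n + 2])) (borel \<Otimes>\<^sub>M listM M)"

definition degenerate :: "'a measure \<Rightarrow> 'a measure measure \<Rightarrow> ('a \<Rightarrow> real) \<Rightarrow> bool" where
  "degenerate M Prior \<phi>k \<longleftrightarrow>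
    (\<exists>n. AE \<omega> in seq_space Prior.
       real_cond_exp (seq_space Prior) (cond_sigma M Prior \<phi>k n)
         (indicator {\<omega>. \<phi>k (\<omega> 1) \<le> \<phi>k (\<omega> 0)}) \<omega> =
       real_cond_exp (seq_space Prior) (cond_sigma M Prior \<phi>k (Suc n))
         (indicator {\<omega>. \<phi>k (\<omega> 1) \<le> \<phi>k (\<omega> 0)}) \<omega>)"

end

theory Submission
  imports Defs
begin

lemma PiM_kernel_meas:
  "(\<lambda>D. PiM I (\<lambda>_. D)) \<in> prob_algebra M \<rightarrow>\<^sub>M prob_algebra (PiM I (\<lambda>_. M))"
proof (rule measurable_prob_algebra_generated[OF sets_PiM Int_stable_prod_algebra prod_algebra_sets_into_space])
  fix D assume D: "D \<in> space (prob_algebra M)"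
  then have pD: "prob_space D" and sD: "sets D = sets M" by (auto simp: space_prob_algebra)
  show "prob_space (PiM I (\<lambda>_. D))" using pD by (intro prob_space_PiM) auto
  show "sets (PiM I (\<lambda>_. D)) = sets (PiM I (\<lambda>_. M))" using sD by (intro sets_PiM_cong) auto
next
  fix A assume "A \<in> prod_algebra I (\<lambda>_. M)"
  then obtain J E where A: "A = prod_emb I (\<lambda>_. M) J (\<Pi>\<^sub>E j\<in>J. E j)"
    "finite J" "J \<subseteq> I" "\<And>i. i \<in> J \<Longrightarrow> E i \<in> sets M"
    by (rule prod_algebraE) auto
  have "(\<lambda>D. \<Prod>j\<in>J. emeasure D (E j)) \<in> borel_measurable (prob_algebra M)"
    using A(4) unfolding prob_algebra_def
    by (intro borel_measurable_prod_ennreal measurable_restrict_space1 measurable_emeasure_subprob_algebra) auto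
  then show "(\<lambda>D. emeasure (PiM I (\<lambda>_. D)) A) \<in> borel_measurable (prob_algebra M)"
  proof (rule measurable_cong[THEN iffD1, rotated])
    fix D assume D: "D \<in> space (prob_algebra M)"
    then have pD: "prob_space D" and sD: "sets D = sets M" by (auto simp: space_prob_algebra)
    have spD: "space D = space M" using sD by (rule sets_eq_imp_space_eq)
    have "A = prod_emb I (\<lambda>_. D) J (\<Pi>\<^sub>E j\<in>J. E j)" using A(1) spD by (simp add: prod_emb_def)
    then show "(\<Prod>j\<in>J. emeasure D (E j)) = emeasure (PiM I (\<lambda>_. D)) A"
      using A(2-4) pD sD by (simp add: emeasure_PiM_emb prob_space.emeasure_space_1)
  qed
qed

locale prior_setup =
  fixes M :: "'a measure" and Prior :: "'a measure measure"
  assumes prior: "Prior \<in> space (prob_algebra (prob_algebra M))"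
begin

definition P :: "'i set \<Rightarrow> ('i \<Rightarrow> 'a) measure" where
  "P I = Prior \<bind> (\<lambda>D. PiM I (\<lambda>_. D))"

lemma Prior_prob: "prob_space Prior" and sets_Prior: "sets Prior = sets (prob_algebra M)"
  using prior by (auto simp: space_prob_algebra)

lemma space_Prior: "space Prior = space (prob_algebra M)"
  using sets_Prior by (rule sets_eq_imp_space_eq)

lemma space_Prior_ne: "space Prior \<noteq> {}"
  using Prior_prob prob_space.not_empty by blast

lemma kernel_meas: "(\<lambda>D. PiM I (\<lambda>_. D)) \<in> Prior \<rightarrow>\<^sub>M prob_algebra (PiM I (\<lambda>_. M))"
  using PiM_kernel_meas measurable_cong_sets[OF sets_Prior refl] by blast

lemma prob_P: "prob_space (P I)"
  unfolding P_def using prior PiM_kernel_meas by (rule prob_space_bind')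

lemma sets_P: "sets (P I) = sets (PiM I (\<lambda>_. M))"
  unfolding P_def
proof (rule sets_bind[OF _ space_Prior_ne])
  fix D assume "D \<in> space Prior"
  then have "sets D = sets M" by (auto simp: space_Prior space_prob_algebra)
  then show "sets (PiM I (\<lambda>_. D)) = sets (PiM I (\<lambda>_. M))" by (intro sets_PiM_cong) auto
qed

lemma space_P: "space (P I) = space (PiM I (\<lambda>_. M))"
  using sets_P by (rule sets_eq_imp_space_eq)

lemma reindex_P:
  assumes inj: "inj_on \<sigma> J" and into: "\<sigma> \<in> J \<rightarrow> I"
  shows "distr (P I) (PiM J (\<lambda>_. M)) (\<lambda>\<omega>. \<lambda>q\<in>J. \<omega> (\<sigma> q)) = P J"
proof -
  have fm: "(\<lambda>\<omega>. \<lambda>q\<in>J. \<omega> (\<sigma> q)) \<in> PiM I (\<lambda>_. M) \<rightarrow>\<^sub>M PiM J (\<lambda>_. M)"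
    using into by (intro measurable_restrict) (auto intro!: measurable_PiM_component_rev)
  have "distr (P I) (PiM J (\<lambda>_. M)) (\<lambda>\<omega>. \<lambda>q\<in>J. \<omega> (\<sigma> q))
     = Prior \<bind> (\<lambda>D. distr (PiM I (\<lambda>_. D)) (PiM J (\<lambda>_. M)) (\<lambda>\<omega>. \<lambda>q\<in>J. \<omega> (\<sigma> q)))"
    unfolding P_def
    by (rule distr_bind[OF measurable_prob_algebraD[OF kernel_meas] space_Prior_ne fm])
  also have "\<dots> = P J" unfolding P_def
  proof (rule bind_cong[OF refl])
    fix D assume "D \<in> space Prior"
    then have pD: "prob_space D" and sD: "sets D = sets M" by (auto simp: space_Prior space_prob_algebra)
    have "distr (PiM I (\<lambda>_. D)) (PiM J (\<lambda>_. M)) (\<lambda>\<omega>. \<lambda>q\<in>J. \<omega> (\<sigma> q))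
        = distr (PiM I (\<lambda>_. D)) (PiM J (\<lambda>_. D)) (\<lambda>\<omega>. \<lambda>q\<in>J. \<omega> (\<sigma> q))"
      using sD by (intro distr_cong refl sets_PiM_cong) auto
    also have "\<dots> = PiM J (\<lambda>_. D)"
      using distr_PiM_reindex[of I "\<lambda>_. D" \<sigma> J] pD inj into by simp
    finally show "distr (PiM I (\<lambda>_. D)) (PiM J (\<lambda>_. M)) (\<lambda>\<omega>. \<lambda>q\<in>J. \<omega> (\<sigma> q)) = PiM J (\<lambda>_. D)" .
  qed
  finally show ?thesis .
qed

end


context prior_setup begin

lemma meas_reidx:
  assumes "\<sigma> \<in> J \<rightarrow> I"
  shows "(\<lambda>\<omega>. \<lambda>q\<in>J. \<omega> (\<sigma> q)) \<in> P I \<rightarrow>\<^sub>M PiM J (\<lambda>_. M)"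
proof -
  have "(\<lambda>\<omega>. \<lambda>q\<in>J. \<omega> (\<sigma> q)) \<in> PiM I (\<lambda>_. M) \<rightarrow>\<^sub>M PiM J (\<lambda>_. M)"
    using assms by (auto intro!: measurable_restrict measurable_PiM_component_rev)
  then show ?thesis using measurable_cong_sets[OF sets_P refl] by blast
qed

lemma integral_reindex:
  assumes inj: "inj_on \<sigma> J" and into: "\<sigma> \<in> J \<rightarrow> I"
    and g: "(g::_\<Rightarrow>real) \<in> borel_measurable (PiM J (\<lambda>_. M))"
  shows "(\<integral>\<omega>. g (\<lambda>q\<in>J. \<omega> (\<sigma> q)) \<partial>P I) = (\<integral>\<omega>. g \<omega> \<partial>P J)"
proof -
  have "(\<integral>\<omega>. g \<omega> \<partial>P J) = (\<integral>\<omega>. g \<omega> \<partial>distr (P I) (PiM J (\<lambda>_. M)) (\<lambda>\<omega>. \<lambda>q\<in>J. \<omega> (\<sigma> q)))"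
    using reindex_P[OF inj into] by simp
  also have "\<dots> = (\<integral>\<omega>. g (\<lambda>q\<in>J. \<omega> (\<sigma> q)) \<partial>P I)"
    by (rule integral_distr[OF meas_reidx[OF into] g])
  finally show ?thesis by simp
qed

lemma AE_reindex:
  assumes inj: "inj_on \<sigma> J" and into: "\<sigma> \<in> J \<rightarrow> I"
    and ae: "AE \<omega> in P J. Q \<omega>"
  shows "AE \<omega> in P I. Q (\<lambda>q\<in>J. \<omega> (\<sigma> q))"
proof -
  have "AE \<omega> in distr (P I) (PiM J (\<lambda>_. M)) (\<lambda>\<omega>. \<lambda>q\<in>J. \<omega> (\<sigma> q)). Q \<omega>"
    unfolding reindex_P[OF inj into] by (rule ae)
  then show ?thesis
    by (rule AE_distrD[OF meas_reidx[OF into]])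
qed

end


definition listG :: "'a measure \<Rightarrow> 'a list set set" where
  "listG M = (\<Union>n. {{xs \<in> lists (space M). length xs = n \<and> (\<lambda>i\<in>{..<n}. xs ! i) \<in> A} | A.
            A \<in> sets (PiM {..<n} (\<lambda>_. M))})"

lemma listG_Pow: "listG M \<subseteq> Pow (lists (space M))"
  unfolding listG_def by auto

lemma listM_eq: "listM M = sigma (lists (space M)) (listG M)"
  unfolding listM_def listG_def ..

lemma space_listM: "space (listM M) = lists (space M)"
  unfolding listM_eq using listG_Pow by (rule space_measure_of)

lemma sets_listM: "sets (listM M) = sigma_sets (lists (space M)) (listG M)"
  unfolding listM_eq using listG_Pow by (rule sets_measure_of)

lemma listM_gen:
  assumes "A \<in> sets (PiM {..<n} (\<lambda>_. M))"
  shows "{xs \<in> lists (space M). length xs = n \<and> (\<lambda>i\<in>{..<n}. xs ! i) \<in> A} \<in> sets (listM M)"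
  unfolding sets_listM using assms by (intro sigma_sets.Basic) (auto simp: listG_def)

lemma listM_len: "{xs \<in> lists (space M). length xs = n} \<in> sets (listM M)"
proof -
  have "{xs \<in> lists (space M). length xs = n} =
    {xs \<in> lists (space M). length xs = n \<and> (\<lambda>i\<in>{..<n}. xs ! i) \<in> space (PiM {..<n} (\<lambda>_. M))}"
    by (auto simp: space_PiM)
  then show ?thesis using listM_gen[OF sets.top] by simp
qed

lemma listM_out: "(\<lambda>x. map x [0..<n]) \<in> PiM {..<n} (\<lambda>_. M) \<rightarrow>\<^sub>M listM M"
proof (rule measurable_sigma_sets[OF sets_listM listG_Pow])
  show "(\<lambda>x. map x [0..<n]) \<in> space (PiM {..<n} (\<lambda>_. M)) \<rightarrow> lists (space M)"
  proof
    fix x assume x: "x \<in> space (PiM {..<n} (\<lambda>_. M))"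
    have "x i \<in> space M" if "i < n" for i
      using PiE_mem[OF x[unfolded space_PiM]] that by simp
    then show "map x [0..<n] \<in> lists (space M)" by (auto simp: lists_eq_set)
  qed
next
  fix y assume "y \<in> listG M"
  then obtain n' A where y: "y = {xs \<in> lists (space M). length xs = n' \<and> (\<lambda>i\<in>{..<n'}. xs ! i) \<in> A}"
    and A: "A \<in> sets (PiM {..<n'} (\<lambda>_. M))" unfolding listG_def by auto
  show "(\<lambda>x. map x [0..<n]) -` y \<inter> space (PiM {..<n} (\<lambda>_. M)) \<in> sets (PiM {..<n} (\<lambda>_. M))"
  proof (cases "n' = n")
    case True
    have r: "(\<lambda>i\<in>{..<n}. map x [0..<n] ! i) = x" if "x \<in> space (PiM {..<n} (\<lambda>_. M))" for x
    proof (rule ext)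
      fix i show "(\<lambda>i\<in>{..<n}. map x [0..<n] ! i) i = x i"
      proof (cases "i < n")
        case False
        then have "x i = undefined" using that unfolding space_PiM PiE_def extensional_def by simp
        then show ?thesis using False by simp
      qed simp
    qed
    have l: "set (map x [0..<n]) \<subseteq> space M" if "x \<in> space (PiM {..<n} (\<lambda>_. M))" for x
    proof -
      have "x i \<in> space M" if "i < n" for i
        using PiE_mem[OF \<open>x \<in> space (PiM {..<n} (\<lambda>_. M))\<close>[unfolded space_PiM]] that by simp
      then show ?thesis by auto
    qed
    have "(\<lambda>x. map x [0..<n]) -` y \<inter> space (PiM {..<n} (\<lambda>_. M)) = A \<inter> space (PiM {..<n} (\<lambda>_. M))"
    proof (intro set_eqI)
      fix x
      show "x \<in> (\<lambda>x. map x [0..<n]) -` y \<inter> space (PiM {..<n} (\<lambda>_. M)) \<longleftrightarrow> x \<in> A \<inter> space (PiM {..<n} (\<lambda>_. M))"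
      proof (cases "x \<in> space (PiM {..<n} (\<lambda>_. M))")
        case xs: True
        have "x \<in> (\<lambda>x. map x [0..<n]) -` y \<longleftrightarrow> (\<lambda>i\<in>{..<n}. map x [0..<n] ! i) \<in> A"
          unfolding y True using l[OF xs] by (simp add: lists_eq_set)
        then show ?thesis using r[OF xs] xs by simp
      qed simp
    qed
    also have "\<dots> = A" using A True sets.sets_into_space by blast
    finally show ?thesis using A True by simp
  next
    case False
    have "(\<lambda>x. map x [0..<n]) -` y \<inter> space (PiM {..<n} (\<lambda>_. M)) = {}"
    proof (intro equals0I)
      fix x assume "x \<in> (\<lambda>x. map x [0..<n]) -` y \<inter> space (PiM {..<n} (\<lambda>_. M))"
      then have "length (map x [0..<n]) = n'" unfolding y by simp
      then show False using False by simp
    qed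
    then show ?thesis by simp
  qed
qed

lemma listM_rst: "(\<lambda>xs. \<lambda>i\<in>{..<n}. xs ! i) \<in> restrict_space (listM M) {xs. length xs = n} \<rightarrow>\<^sub>M PiM {..<n} (\<lambda>_. M)"
proof (rule measurableI)
  fix x assume "x \<in> space (restrict_space (listM M) {xs. length xs = n})"
  then show "(\<lambda>i\<in>{..<n}. x ! i) \<in> space (PiM {..<n} (\<lambda>_. M))"
    by (auto simp: space_restrict_space space_listM space_PiM)
next
  fix A assume A: "A \<in> sets (PiM {..<n} (\<lambda>_. M))"
  have "(\<lambda>xs. \<lambda>i\<in>{..<n}. xs ! i) -` A \<inter> space (restrict_space (listM M) {xs. length xs = n})
      = {xs \<in> lists (space M). length xs = n \<and> (\<lambda>i\<in>{..<n}. xs ! i) \<in> A}"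
    by (auto simp: space_restrict_space space_listM)
  also have "\<dots> \<in> sets (restrict_space (listM M) {xs. length xs = n})"
    unfolding sets_restrict_space image_iff
    by (intro bexI[OF _ listM_gen[OF A]]) auto
  finally show "(\<lambda>xs. \<lambda>i\<in>{..<n}. xs ! i) -` A \<inter> space (restrict_space (listM M) {xs. length xs = n})
      \<in> sets (restrict_space (listM M) {xs. length xs = n})" .
qed

lemma listM_in:
  assumes g: "\<And>n. (\<lambda>x. g (map x [0..<n])) \<in> PiM {..<n} (\<lambda>_. M) \<rightarrow>\<^sub>M N"
  shows "g \<in> listM M \<rightarrow>\<^sub>M N"
proof (rule measurable_piecewise_restrict[of "range (\<lambda>n. {xs. length xs = n})"])
  show "countable (range (\<lambda>n. {xs. length xs = n}))" by simp
  show "space (listM M) \<subseteq> \<Union> (range (\<lambda>n. {xs. length xs = n}))" by auto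
next
  fix \<Omega> assume "\<Omega> \<in> range (\<lambda>n. {xs::'a list. length xs = n})"
  then obtain n where \<Omega>: "\<Omega> = {xs. length xs = n}" by auto
  have "\<Omega> \<inter> space (listM M) = {xs \<in> lists (space M). length xs = n}"
    unfolding \<Omega> space_listM by auto
  then show "\<Omega> \<inter> space (listM M) \<in> sets (listM M)" using listM_len by simp
  have "(\<lambda>xs. (\<lambda>x. g (map x [0..<n])) (\<lambda>i\<in>{..<n}. xs ! i)) \<in> restrict_space (listM M) \<Omega> \<rightarrow>\<^sub>M N"
    unfolding \<Omega> by (rule measurable_comp[OF listM_rst g, unfolded comp_def])
  then show "g \<in> restrict_space (listM M) \<Omega> \<rightarrow>\<^sub>M N"
  proof (rule measurable_cong[THEN iffD1, rotated])
    fix xs assume "xs \<in> space (restrict_space (listM M) \<Omega>)"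
    then have "length xs = n" by (auto simp: space_restrict_space \<Omega>)
    then have "map (\<lambda>i\<in>{..<n}. xs ! i) [0..<n] = xs" by (auto intro: nth_equalityI)
    then show "(\<lambda>x. g (map x [0..<n])) (\<lambda>i\<in>{..<n}. xs ! i) = g xs" by simp
  qed
qed

lemma listM_len_pair:
  assumes H: "\<And>j. (\<lambda>(xs, t). H j xs t) \<in> listM M \<Otimes>\<^sub>M B \<rightarrow>\<^sub>M N"
  shows "(\<lambda>(xs, t). H (length xs) xs t) \<in> listM M \<Otimes>\<^sub>M B \<rightarrow>\<^sub>M N"
proof (rule measurable_piecewise_restrict[of "range (\<lambda>n. {p. length (fst p) = n})"])
  show "countable (range (\<lambda>n. {p::'a list \<times> 'b. length (fst p) = n}))" by simp
  show "space (listM M \<Otimes>\<^sub>M B) \<subseteq> \<Union> (range (\<lambda>n. {p. length (fst p) = n}))" by auto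
next
  fix \<Omega> assume "\<Omega> \<in> range (\<lambda>n. {p::'a list \<times> 'b. length (fst p) = n})"
  then obtain n where \<Omega>: "\<Omega> = {p. length (fst p) = n}" by auto
  have "\<Omega> \<inter> space (listM M \<Otimes>\<^sub>M B) = {xs \<in> lists (space M). length xs = n} \<times> space B"
    unfolding \<Omega> space_pair_measure space_listM by auto
  then show "\<Omega> \<inter> space (listM M \<Otimes>\<^sub>M B) \<in> sets (listM M \<Otimes>\<^sub>M B)"
    using pair_measureI[OF listM_len sets.top] by simp
  have "(\<lambda>(xs, t). H n xs t) \<in> restrict_space (listM M \<Otimes>\<^sub>M B) \<Omega> \<rightarrow>\<^sub>M N"
    by (rule measurable_restrict_space1[OF H])
  then show "(\<lambda>(xs, t). H (length xs) xs t) \<in> restrict_space (listM M \<Otimes>\<^sub>M B) \<Omega> \<rightarrow>\<^sub>M N"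
    by (rule measurable_cong[THEN iffD1, rotated]) (auto simp: space_restrict_space \<Omega>)
qed


lemma vimage_subalg:
  assumes T: "T \<in> N \<rightarrow>\<^sub>M X"
  shows "subalgebra N (vimage_algebra (space N) T X)"
  unfolding subalgebra_def
proof
  show "space (vimage_algebra (space N) T X) = space N" by simp
  have "T \<in> space N \<rightarrow> space X" using measurable_space[OF T] by auto
  then show "sets (vimage_algebra (space N) T X) \<subseteq> sets N"
    using T by (auto simp: sets_vimage_algebra2 measurable_sets)
qed

lemma sfs_vimage:
  assumes "prob_space N" "T \<in> N \<rightarrow>\<^sub>M X"
  shows "sigma_finite_subalgebra N (vimage_algebra (space N) T X)"
proof -
  interpret prob_space N by fact
  have "finite_measure_subalgebra N (vimage_algebra (space N) T X)"
    unfolding finite_measure_subalgebra_def finite_measure_subalgebra_axioms_def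
    using vimage_subalg[OF assms(2)] finite_measure_axioms by simp
  then show ?thesis by (rule finite_measure_subalgebra_is_sigma_finite)
qed

lemma bnd_int:
  assumes "finite_measure N" "(f::_\<Rightarrow>real) \<in> borel_measurable N" "\<And>x. x \<in> space N \<Longrightarrow> \<bar>f x\<bar> \<le> B"
  shows "integrable N f"
  using assms by (intro finite_measure.integrable_const_bound[where B=B]) auto

lemma orth:
  fixes F u W :: "_ \<Rightarrow> real"
  assumes sfs: "sigma_finite_subalgebra N S" and fin: "finite_measure N"
    and F: "F \<in> borel_measurable N" and u: "u \<in> borel_measurable S" and W: "W \<in> borel_measurable S"
    and bF: "\<And>x. x \<in> space N \<Longrightarrow> \<bar>F x\<bar> \<le> B"
    and bu: "\<And>x. x \<in> space N \<Longrightarrow> \<bar>u x\<bar> \<le> B"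
    and bW: "\<And>x. x \<in> space N \<Longrightarrow> \<bar>W x\<bar> \<le> B"
    and ce: "AE x in N. u x = real_cond_exp N S F x"
  shows "(\<integral>x. (W x - F x)\<^sup>2 \<partial>N) = (\<integral>x. (W x - u x)\<^sup>2 \<partial>N) + (\<integral>x. (u x - F x)\<^sup>2 \<partial>N)"
proof -
  interpret sigma_finite_subalgebra N S by fact
  have sub: "sets S \<subseteq> sets N" "space S = space N" using subalg by (auto simp: subalgebra_def)
  have uN: "u \<in> borel_measurable N" and WN: "W \<in> borel_measurable N"
    using u W sub borel_measurable_subalgebra by blast+
  have WuS: "(\<lambda>x. W x - u x) \<in> borel_measurable S" using u W by measurable
  have bWu: "\<bar>W x - u x\<bar> \<le> 2 * B" if "x \<in> space N" for x using bu[OF that] bW[OF that] by simp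
  have i1: "integrable N (\<lambda>x. (W x - u x) * F x)"
  proof (rule bnd_int[OF fin, where B="2*B*B"])
    show "(\<lambda>x. (W x - u x) * F x) \<in> borel_measurable N" using uN WN F by measurable
    fix x assume x: "x \<in> space N"
    have "\<bar>(W x - u x) * F x\<bar> = \<bar>W x - u x\<bar> * \<bar>F x\<bar>" by (simp add: abs_mult)
    also have "\<dots> \<le> (2*B) * B" using bWu[OF x] bF[OF x] by (intro mult_mono) auto
    finally show "\<bar>(W x - u x) * F x\<bar> \<le> 2*B*B" by simp
  qed
  have i2: "integrable N (\<lambda>x. (W x - u x) * u x)"
  proof (rule bnd_int[OF fin, where B="2*B*B"])
    show "(\<lambda>x. (W x - u x) * u x) \<in> borel_measurable N" using uN WN by measurable
    fix x assume x: "x \<in> space N"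
    have "\<bar>(W x - u x) * u x\<bar> = \<bar>W x - u x\<bar> * \<bar>u x\<bar>" by (simp add: abs_mult)
    also have "\<dots> \<le> (2*B) * B" using bWu[OF x] bu[OF x] by (intro mult_mono) auto
    finally show "\<bar>(W x - u x) * u x\<bar> \<le> 2*B*B" by simp
  qed
  have sq: "\<And>f. f \<in> borel_measurable N \<Longrightarrow> (\<And>x. x \<in> space N \<Longrightarrow> \<bar>f x\<bar> \<le> 2*B) \<Longrightarrow> integrable N (\<lambda>x. (f x)\<^sup>2)"
  proof -
    fix f :: "_ \<Rightarrow> real" assume f: "f \<in> borel_measurable N" and b: "\<And>x. x \<in> space N \<Longrightarrow> \<bar>f x\<bar> \<le> 2*B"
    show "integrable N (\<lambda>x. (f x)\<^sup>2)"
    proof (rule bnd_int[OF fin, where B="(2*B)\<^sup>2"])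
      show "(\<lambda>x. (f x)\<^sup>2) \<in> borel_measurable N" using f by measurable
      fix x assume x: "x \<in> space N"
      have "\<bar>(f x)\<^sup>2\<bar> = \<bar>f x\<bar>\<^sup>2" by simp
      also have "\<dots> \<le> (2*B)\<^sup>2" using b[OF x] by (intro power_mono) auto
      finally show "\<bar>(f x)\<^sup>2\<bar> \<le> (2*B)\<^sup>2" .
    qed
  qed
  have iWu: "integrable N (\<lambda>x. (W x - u x)\<^sup>2)" using sq[of "\<lambda>x. W x - u x"] WN uN bWu by auto
  have iuF: "integrable N (\<lambda>x. (u x - F x)\<^sup>2)"
  proof (rule sq)
    show "(\<lambda>x. u x - F x) \<in> borel_measurable N" using uN F by measurable
    fix x assume x: "x \<in> space N"
    show "\<bar>u x - F x\<bar> \<le> 2*B" using bu[OF x] bF[OF x] by simp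
  qed
  have "(\<integral>x. (W x - u x) * F x \<partial>N) = (\<integral>x. (W x - u x) * real_cond_exp N S F x \<partial>N)"
    using real_cond_exp_intg(2)[OF i1 WuS F] by simp
  also have "\<dots> = (\<integral>x. (W x - u x) * u x \<partial>N)"
  proof (rule integral_cong_AE)
    show "(\<lambda>x. (W x - u x) * real_cond_exp N S F x) \<in> borel_measurable N"
      using WN uN borel_measurable_cond_exp2 by measurable
    show "(\<lambda>x. (W x - u x) * u x) \<in> borel_measurable N" using WN uN by measurable
    show "AE x in N. (W x - u x) * real_cond_exp N S F x = (W x - u x) * u x" using ce by auto
  qed
  finally have cross: "(\<integral>x. (W x - u x) * (u x - F x) \<partial>N) = 0"
    using i1 i2 by (simp add: right_diff_distrib)
  have icross: "integrable N (\<lambda>x. (W x - u x) * (u x - F x))"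
    using i1 i2 by (simp add: right_diff_distrib)
  have "(\<integral>x. (W x - F x)\<^sup>2 \<partial>N) = (\<integral>x. (W x - u x)\<^sup>2 + (u x - F x)\<^sup>2 + 2 * ((W x - u x) * (u x - F x)) \<partial>N)"
    by (intro Bochner_Integration.integral_cong refl) (simp add: power2_eq_square algebra_simps)
  also have "\<dots> = (\<integral>x. (W x - u x)\<^sup>2 \<partial>N) + (\<integral>x. (u x - F x)\<^sup>2 \<partial>N) + 2 * (\<integral>x. (W x - u x) * (u x - F x) \<partial>N)"
    using iWu iuF icross by simp
  finally show ?thesis using cross by simp
qed

lemma length_filter_sum: "real (length (filter P xs)) = (\<Sum>x\<leftarrow>xs. if P x then 1 else 0)"
  by (induction xs) auto

lemma ecdf_upt:
  "ecdf (map g [a..<b]) t = (\<Sum>q\<in>{a..<b}. if g q \<le> t then 1 else 0) / real (b - a)"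
  unfolding ecdf_def length_filter_sum by (simp add: comp_def flip: sum_set_upt_conv_sum_list_nat)

lemma ecdf_bounds: "0 \<le> ecdf S t" "ecdf S t \<le> 1"
  unfolding ecdf_def by (auto simp: divide_le_eq_1)


lemma map_meas:
  assumes "{..<j} \<subseteq> Q"
  shows "(\<lambda>\<omega>. map \<omega> [0..<j]) \<in> PiM Q (\<lambda>_. M) \<rightarrow>\<^sub>M listM M"
proof -
  have "(\<lambda>\<omega>. map (\<lambda>i\<in>{..<j}. \<omega> i) [0..<j]) \<in> PiM Q (\<lambda>_. M) \<rightarrow>\<^sub>M listM M"
    using measurable_comp[OF measurable_restrict_subset[OF assms] listM_out]
    by (simp add: comp_def)
  moreover have "map (\<lambda>i\<in>{..<j}. \<omega> i) [0..<j] = map \<omega> [0..<j]" for \<omega> :: "nat \<Rightarrow> 'a"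
    by (intro map_cong) auto
  ultimately show ?thesis by simp
qed

lemma ecdf_meas:
  fixes \<psi> :: "'a \<Rightarrow> real"
  assumes \<psi>: "\<psi> \<in> borel_measurable M" and Q: "j \<in> Q" "{a..<b} \<subseteq> Q"
  shows "(\<lambda>\<omega>. ecdf (map \<psi> (map \<omega> [a..<b])) (\<psi> (\<omega> j))) \<in> borel_measurable (PiM Q (\<lambda>_. M))"
proof -
  have eq: "ecdf (map \<psi> (map \<omega> [a..<b])) (\<psi> (\<omega> j)) =
      (\<Sum>q\<in>{a..<b}. if \<psi> (\<omega> q) \<le> \<psi> (\<omega> j) then 1 else 0) / real (b - a)" for \<omega> :: "nat \<Rightarrow> 'a"
    using ecdf_upt[of "\<lambda>q. \<psi> (\<omega> q)" a b "\<psi> (\<omega> j)"] by (simp add: comp_def)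
  have cj: "(\<lambda>\<omega>. \<psi> (\<omega> j)) \<in> borel_measurable (PiM Q (\<lambda>_. M))"
    using measurable_comp[OF measurable_component_singleton[OF Q(1)] \<psi>] by (simp add: comp_def)
  have cq: "(\<lambda>\<omega>. \<psi> (\<omega> q)) \<in> borel_measurable (PiM Q (\<lambda>_. M))" if "q \<in> {a..<b}" for q
    using measurable_comp[OF measurable_component_singleton[of q Q] \<psi>] that Q(2) by (auto simp: comp_def)
  have "(\<lambda>\<omega>. (\<Sum>q\<in>{a..<b}. if \<psi> (\<omega> q) \<le> \<psi> (\<omega> j) then 1 else 0) / real (b - a))
      \<in> borel_measurable (PiM Q (\<lambda>_. M))"
    using cj cq by (intro borel_measurable_divide borel_measurable_sum borel_measurable_const) measurable
  then show ?thesis unfolding eq .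
qed

locale main_setup = prior_setup M Prior for M :: "'a measure" and Prior +
  fixes K :: nat and \<phi> :: "nat \<Rightarrow> 'a \<Rightarrow> real"
    and h :: "nat \<Rightarrow> nat \<Rightarrow> nat \<Rightarrow> 'a list \<Rightarrow> real \<Rightarrow> real"
  assumes features: "\<forall>k<K. \<phi> k \<in> borel_measurable M"
    and hyp_h: "valid_h M Prior K \<phi> h"
begin

lemma phi_meas: "k < K \<Longrightarrow> \<phi> k \<in> borel_measurable M" using features by auto

lemma hv: "k < K \<Longrightarrow> 1 \<le> r \<Longrightarrow>
       (\<lambda>(xs, t). h k j r xs t) \<in> borel_measurable (listM M \<Otimes>\<^sub>M borel)
     \<and> (\<forall>xs t. xs \<in> lists (space M) \<longrightarrow> length xs = j \<longrightarrow> h k j r xs t \<in> {0..1})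
     \<and> (AE \<omega> in h_space Prior j r.
          h k j r (map \<omega> [0..<j]) (\<phi> k (\<omega> j)) =
          real_cond_exp (h_space Prior j r)
            (vimage_algebra (space (h_space Prior j r))
               (\<lambda>\<omega>. (map \<omega> [0..<j], \<phi> k (\<omega> j))) (listM M \<Otimes>\<^sub>M borel))
            (\<lambda>\<omega>. ecdf (map (\<phi> k) (map \<omega> [j + 1..<j + 1 + r])) (\<phi> k (\<omega> j))) \<omega>)"
  by (rule hyp_h[unfolded valid_h_def, rule_format])

lemma h_meas: "k < K \<Longrightarrow> 1 \<le> r \<Longrightarrow> (\<lambda>(xs, t). h k j r xs t) \<in> listM M \<Otimes>\<^sub>M borel \<rightarrow>\<^sub>M borel"
  by (rule hv[THEN conjunct1])

lemma h_len_meas: "k < K \<Longrightarrow> 1 \<le> r \<Longrightarrow> (\<lambda>(xs, t). h k (length xs) r xs t) \<in> listM M \<Otimes>\<^sub>M borel \<rightarrow>\<^sub>M borel"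
  by (rule listM_len_pair[of "\<lambda>j xs t. h k j r xs t", OF h_meas])

lemma h_bnd: "k < K \<Longrightarrow> 1 \<le> r \<Longrightarrow> xs \<in> lists (space M) \<Longrightarrow> 0 \<le> h k (length xs) r xs t \<and> h k (length xs) r xs t \<le> 1"
proof -
  assume a: "k < K" "1 \<le> r" "xs \<in> lists (space M)"
  have "\<forall>xs' t. xs' \<in> lists (space M) \<longrightarrow> length xs' = length xs \<longrightarrow> h k (length xs) r xs' t \<in> {0..1}"
    by (rule hv[OF a(1,2), THEN conjunct2, THEN conjunct1])
  then have "h k (length xs) r xs t \<in> {0..1}" using a(3) by blast
  then show ?thesis by simp
qed

lemma h_bnd_abs: "k < K \<Longrightarrow> 1 \<le> r \<Longrightarrow> xs \<in> lists (space M) \<Longrightarrow> length xs = j \<Longrightarrow> \<bar>h k j r xs t\<bar> \<le> 1"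
proof -
  assume a: "k < K" "1 \<le> r" "xs \<in> lists (space M)" "length xs = j"
  from h_bnd[OF a(1-3), of t] show ?thesis unfolding a(4) by simp
qed

lemma h_space_P: "h_space Prior j r = P {..<j + 1 + r}"
  unfolding h_space_def P_def ..

lemma seq_space_P: "seq_space Prior = P UNIV"
  unfolding seq_space_def P_def ..

lemma data_P: "data_measure Prior m n = P {(j, l). j < m \<and> l < n j}"
  unfolding data_measure_def P_def ..

lemma h_ce: "k < K \<Longrightarrow> 1 \<le> r \<Longrightarrow> AE \<omega> in P {..<j + 1 + r}.
          h k j r (map \<omega> [0..<j]) (\<phi> k (\<omega> j)) =
          real_cond_exp (P {..<j + 1 + r})
            (vimage_algebra (space (P {..<j + 1 + r}))
               (\<lambda>\<omega>. (map \<omega> [0..<j], \<phi> k (\<omega> j))) (listM M \<Otimes>\<^sub>M borel))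
            (\<lambda>\<omega>. ecdf (map (\<phi> k) (map \<omega> [j + 1..<j + 1 + r])) (\<phi> k (\<omega> j))) \<omega>"
  using hv[THEN conjunct2, THEN conjunct2] unfolding h_space_P .

end

definition Lidx :: "nat \<Rightarrow> (nat \<Rightarrow> nat) \<Rightarrow> nat \<Rightarrow> (nat \<times> nat) list" where
  "Lidx m n i = concat (map (\<lambda>j. map (\<lambda>l. (j, l)) [0..<n j]) (filter (\<lambda>j. j \<noteq> i) [0..<m]))"

definition Seqi :: "nat \<Rightarrow> (nat \<Rightarrow> nat) \<Rightarrow> nat \<Rightarrow> nat \<Rightarrow> (nat \<times> nat) list" where
  "Seqi m n i p = map (\<lambda>l. (i, l)) [0..<n i] @ [Lidx m n i ! p] @ remove_nth p (Lidx m n i)"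

lemma others_eq:
  "others_sub m ((\<lambda>_. id)(i := g)) n i \<omega> = map \<omega> (Lidx m n i)"
proof -
  have "others_sub m ((\<lambda>_. id)(i := g)) n i \<omega> =
     concat (map (\<lambda>j. map \<omega> (map (\<lambda>l. (j, l)) [0..<n j])) (filter (\<lambda>j. j \<noteq> i) [0..<m]))"
    unfolding others_sub_def agent_data_def
    by (intro arg_cong[where f=concat] map_cong refl) (simp add: comp_def)
  also have "\<dots> = map \<omega> (Lidx m n i)"
    unfolding Lidx_def by (simp add: map_concat comp_def)
  finally show ?thesis .
qed

lemma agent_eq: "agent_data n i \<omega> = map \<omega> (map (\<lambda>l. (i, l)) [0..<n i])"
  unfolding agent_data_def by simp

lemma sum_list_filter_upt:
  "(\<Sum>j\<leftarrow>filter (\<lambda>j. j \<noteq> i) [0..<m]. (n j::nat)) = (\<Sum>j\<in>{..<m} - {i}. n j)"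
proof -
  have "(\<Sum>j\<leftarrow>filter (\<lambda>j. j \<noteq> i) [0..<m]. n j) = sum n (set (filter (\<lambda>j. j \<noteq> i) [0..<m]))"
    using sum_list_distinct_conv_sum_set[of "filter (\<lambda>j. j \<noteq> i) [0..<m]" n] by simp
  also have "set (filter (\<lambda>j. j \<noteq> i) [0..<m]) = {..<m} - {i}" by auto
  finally show ?thesis .
qed

lemma length_Lidx: "length (Lidx m n i) = (\<Sum>j\<in>{..<m} - {i}. n j)"
  unfolding Lidx_def length_concat by (simp add: comp_def sum_list_filter_upt)

lemma distinct_concat_pairs:
  "distinct js \<Longrightarrow> distinct (concat (map (\<lambda>j. map (\<lambda>l. (j, l)) (xs j)) js)) \<longleftrightarrow> (\<forall>j\<in>set js. distinct (xs j))"
  by (induction js) (auto simp: distinct_map inj_on_def)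

lemma distinct_Lidx: "distinct (Lidx m n i)"
  unfolding Lidx_def by (subst distinct_concat_pairs) auto

lemma set_Lidx: "set (Lidx m n i) = {(j, l). j < m \<and> j \<noteq> i \<and> l < n j}"
  unfolding Lidx_def by auto

lemma remove_nth_map: "remove_nth p (map f xs) = map f (remove_nth p xs)"
  unfolding remove_nth_def by (simp add: take_map drop_map)

lemma length_remove_nth: "p < length xs \<Longrightarrow> length (remove_nth p xs) = length xs - 1"
  unfolding remove_nth_def by simp

lemma distinct_remove_nth:
  assumes "distinct xs" "p < length xs"
  shows "distinct (xs ! p # remove_nth p xs)"
proof -
  have "xs = take p xs @ xs ! p # drop (Suc p) xs" using assms(2) by (simp add: id_take_nth_drop)
  then have "distinct (take p xs @ xs ! p # drop (Suc p) xs)" using assms(1) by simp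
  then show ?thesis unfolding remove_nth_def by auto
qed

lemma set_remove_nth: "set (remove_nth p xs) \<subseteq> set xs"
  unfolding remove_nth_def by (auto dest: in_set_takeD in_set_dropD)

lemma length_Seqi: "p < length (Lidx m n i) \<Longrightarrow> length (Seqi m n i p) = n i + 1 + (length (Lidx m n i) - 1)"
  unfolding Seqi_def by (simp add: length_remove_nth)

lemma distinct_Seqi: "p < length (Lidx m n i) \<Longrightarrow> distinct (Seqi m n i p)"
proof -
  assume p: "p < length (Lidx m n i)"
  have d: "distinct (Lidx m n i ! p # remove_nth p (Lidx m n i))"
    using distinct_remove_nth[OF distinct_Lidx p] .
  have s: "set (Lidx m n i ! p # remove_nth p (Lidx m n i)) \<subseteq> set (Lidx m n i)"
    using set_remove_nth[of p "Lidx m n i"] p by auto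
  have "set (map (\<lambda>l. (i, l)) [0..<n i]) \<inter> set (Lidx m n i) = {}" unfolding set_Lidx by auto
  then show ?thesis unfolding Seqi_def using d s by (auto simp: distinct_map inj_on_def)
qed

lemma set_Seqi: "p < length (Lidx m n i) \<Longrightarrow> i < m \<Longrightarrow> set (Seqi m n i p) \<subseteq> {(j, l). j < m \<and> l < n j}"
proof -
  assume p: "p < length (Lidx m n i)" and i: "i < m"
  have "Lidx m n i ! p \<in> set (Lidx m n i)" using p by simp
  then show ?thesis unfolding Seqi_def using set_remove_nth[of p "Lidx m n i"] i by (auto simp: set_Lidx)
qed

lemma Seqi_nth:
  assumes p: "p < length (Lidx m n i)"
  shows "q < n i \<Longrightarrow> Seqi m n i p ! q = (i, q)"
    and "Seqi m n i p ! n i = Lidx m n i ! p"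
    and "q < length (Lidx m n i) - 1 \<Longrightarrow> Seqi m n i p ! (n i + 1 + q) = remove_nth p (Lidx m n i) ! q"
  unfolding Seqi_def by (auto simp: nth_append)


context main_setup begin

definition Theta :: "('a list \<Rightarrow> 'a list) \<Rightarrow> nat \<Rightarrow> nat \<Rightarrow> nat \<Rightarrow> (nat \<Rightarrow> 'a) \<Rightarrow> real" where
  "Theta g j r k \<omega> = (h k (length (g (map \<omega> [0..<j]))) r (g (map \<omega> [0..<j])) (\<phi> k (\<omega> j))
       - ecdf (map (\<phi> k) (map \<omega> [j + 1..<j + 1 + r])) (\<phi> k (\<omega> j)))\<^sup>2"

definition Lossk :: "('a list \<Rightarrow> 'a list) \<Rightarrow> nat \<Rightarrow> nat \<Rightarrow> nat \<Rightarrow> real" where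
  "Lossk g j r k = (\<integral>\<omega>. Theta g j r k \<omega> \<partial>P {..<j + 1 + r})"

lemma Y_meas: "(\<lambda>\<omega>. map \<omega> [0..<j]) \<in> PiM {..<j + 1 + r} (\<lambda>_. M) \<rightarrow>\<^sub>M listM M"
  by (rule map_meas) auto

lemma T_meas: "k < K \<Longrightarrow> (\<lambda>\<omega>. \<phi> k (\<omega> (j::nat))) \<in> borel_measurable (PiM {..<j + 1 + r} (\<lambda>_. M))"
proof -
  assume k: "k < K"
  have "j \<in> {..<j + 1 + r}" by simp
  from measurable_comp[OF measurable_component_singleton[of j "{..<j + 1 + r}" "\<lambda>_. M", OF this] phi_meas[OF k]]
  show ?thesis unfolding comp_def .
qed

lemma F_meas: "k < K \<Longrightarrow> (\<lambda>\<omega>. ecdf (map (\<phi> k) (map \<omega> [j + 1..<j + 1 + r])) (\<phi> k (\<omega> j)))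
    \<in> borel_measurable (PiM {..<j + 1 + r} (\<lambda>_. M))"
  by (rule ecdf_meas[OF phi_meas]) auto

lemma map_in_lists: "\<omega> \<in> space (PiM Q (\<lambda>_. M)) \<Longrightarrow> {..<j} \<subseteq> Q \<Longrightarrow> map \<omega> [0..<j] \<in> lists (space M)"
proof -
  assume a: "\<omega> \<in> space (PiM Q (\<lambda>_. M))" "{..<j} \<subseteq> Q"
  from measurable_space[OF map_meas[OF a(2)] a(1)] show ?thesis unfolding space_listM .
qed

lemma Theta_meas:
  assumes k: "k < K" and r: "1 \<le> r" and g: "g \<in> listM M \<rightarrow>\<^sub>M listM M"
  shows "Theta g j r k \<in> borel_measurable (PiM {..<j + 1 + r} (\<lambda>_. M))"
proof -
  have p: "(\<lambda>\<omega>. (g (map \<omega> [0..<j]), \<phi> k (\<omega> j))) \<in> PiM {..<j + 1 + r} (\<lambda>_. M) \<rightarrow>\<^sub>M listM M \<Otimes>\<^sub>M borel"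
    by (rule measurable_Pair[OF measurable_comp[OF Y_meas g, unfolded comp_def] T_meas[OF k]])
  have "(\<lambda>\<omega>. h k (length (g (map \<omega> [0..<j]))) r (g (map \<omega> [0..<j])) (\<phi> k (\<omega> j)))
      \<in> borel_measurable (PiM {..<j + 1 + r} (\<lambda>_. M))"
    using measurable_comp[OF p h_len_meas[OF k r]] by (simp add: comp_def)
  then show ?thesis unfolding Theta_def[abs_def] using F_meas[OF k] by measurable
qed

lemma Theta_bnd:
  assumes k: "k < K" and r: "1 \<le> r" and g: "g \<in> listM M \<rightarrow>\<^sub>M listM M"
    and \<omega>: "\<omega> \<in> space (PiM {..<j + 1 + r} (\<lambda>_. M))"
  shows "\<bar>Theta g j r k \<omega>\<bar> \<le> 1"
proof -
  have "map \<omega> [0..<j] \<in> lists (space M)" using map_in_lists[OF \<omega>] by auto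
  then have "g (map \<omega> [0..<j]) \<in> lists (space M)" using measurable_space[OF g] by (auto simp: space_listM)
  then have hb: "0 \<le> h k (length (g (map \<omega> [0..<j]))) r (g (map \<omega> [0..<j])) (\<phi> k (\<omega> j))"
     "h k (length (g (map \<omega> [0..<j]))) r (g (map \<omega> [0..<j])) (\<phi> k (\<omega> j)) \<le> 1"
    using h_bnd[OF k r] by auto
  define a where "a = h k (length (g (map \<omega> [0..<j]))) r (g (map \<omega> [0..<j])) (\<phi> k (\<omega> j))"
  define b where "b = ecdf (map (\<phi> k) (map \<omega> [j + 1..<j + 1 + r])) (\<phi> k (\<omega> j))"
  have ab: "0 \<le> a" "a \<le> 1" "0 \<le> b" "b \<le> 1" using hb ecdf_bounds unfolding a_def b_def by auto
  have "\<bar>a - b\<bar> \<le> 1" using ab by auto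
  then have "\<bar>a - b\<bar>\<^sup>2 \<le> 1\<^sup>2" by (intro power_mono) auto
  then show ?thesis unfolding Theta_def a_def[symmetric] b_def[symmetric] by simp
qed


lemma pointwise_EL:
  assumes N: "length (Lidx m n i) = N" "1 \<le> N"
  shows "mech_loss K \<phi> h (((\<lambda>_. id)(i := g)) i (agent_data n i \<omega>)) (others_sub m ((\<lambda>_. id)(i := g)) n i \<omega>)
    = (1 / real N) * (\<Sum>p<N. (1 / real K) * (\<Sum>k<K.
         Theta g (n i) (N - 1) k (\<lambda>q\<in>{..<n i + 1 + (N - 1)}. \<omega> (Seqi m n i p ! q))))"
proof -
  define L where "L = Lidx m n i"
  define Q where "Q = {..<n i + 1 + (N - 1)}"
  have LN: "length L = N" using N unfolding L_def by simp
  have key: "Theta g (n i) (N - 1) k (\<lambda>q\<in>Q. \<omega> (Seqi m n i p ! q)) =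
     (h k (length (g (map \<omega> (map (\<lambda>l. (i, l)) [0..<n i])))) (length (map \<omega> L) - 1)
           (g (map \<omega> (map (\<lambda>l. (i, l)) [0..<n i]))) (\<phi> k (map \<omega> L ! p))
       - ecdf (map (\<phi> k) (remove_nth p (map \<omega> L))) (\<phi> k (map \<omega> L ! p)))\<^sup>2"
    if p: "p < N" for p k
  proof -
    define \<omega>' where "\<omega>' = (\<lambda>q\<in>Q. \<omega> (Seqi m n i p ! q))"
    have pL: "p < length (Lidx m n i)" using p N by simp
    have A: "map \<omega>' [0..<n i] = map \<omega> (map (\<lambda>l. (i, l)) [0..<n i])"
      unfolding \<omega>'_def Q_def by (intro nth_equalityI) (auto simp: Seqi_nth(1)[OF pL])
    have B: "\<omega>' (n i) = map \<omega> L ! p"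
      unfolding \<omega>'_def Q_def L_def using Seqi_nth(2)[OF pL] pL by simp
    have C: "map \<omega>' [n i + 1..<n i + 1 + (N - 1)] = remove_nth p (map \<omega> L)"
    proof (rule nth_equalityI)
      show "length (map \<omega>' [n i + 1..<n i + 1 + (N - 1)]) = length (remove_nth p (map \<omega> L))"
        using length_remove_nth[of p "map \<omega> L"] p LN by simp
      fix q assume "q < length (map \<omega>' [n i + 1..<n i + 1 + (N - 1)])"
      then have q: "q < N - 1" by (simp only: length_map length_upt)
      have "map \<omega>' [n i + 1..<n i + 1 + (N - 1)] ! q = \<omega>' (n i + 1 + q)"
        using q by (subst nth_map_upt) auto
      also have "\<dots> = \<omega> (remove_nth p L ! q)"
        unfolding \<omega>'_def Q_def L_def using q Seqi_nth(3)[OF pL, of q] N by (simp add: less_diff_conv)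
      also have "\<dots> = remove_nth p (map \<omega> L) ! q"
        unfolding remove_nth_map using q length_remove_nth[of p L] p LN by simp
      finally show "map \<omega>' [n i + 1..<n i + 1 + (N - 1)] ! q = remove_nth p (map \<omega> L) ! q" .
    qed
    show ?thesis unfolding \<omega>'_def[symmetric] Theta_def A B C using LN by simp
  qed
  show ?thesis
    unfolding others_eq agent_eq mech_loss_def L_def[symmetric] Q_def[symmetric]
    using key LN by (simp add: fun_upd_same)
qed


lemma EL:
  assumes i: "i < m" and N: "length (Lidx m n i) = N" "2 \<le> N" and g: "g \<in> listM M \<rightarrow>\<^sub>M listM M"
  shows "expected_loss Prior K \<phi> h m ((\<lambda>_. id)(i := g)) n i = (1 / real K) * (\<Sum>k<K. Lossk g (n i) (N - 1) k)"
proof -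
  define I where "I = {(j, l). j < m \<and> l < n j}"
  define Q where "Q = {..<n i + 1 + (N - 1)}"
  have r: "1 \<le> N - 1" using N by simp
  have lenS: "length (Seqi m n i p) = n i + 1 + (N - 1)" if p: "p < N" for p
  proof -
    have pL: "p < length (Lidx m n i)" using p N(1) by simp
    show ?thesis using length_Seqi[OF pL] unfolding N(1) .
  qed
  have inj: "inj_on (\<lambda>q. Seqi m n i p ! q) Q" if p: "p < N" for p
  proof -
    have pL: "p < length (Lidx m n i)" using p N(1) by simp
    have "\<forall>q\<in>Q. q < length (Seqi m n i p)" unfolding Q_def lenS[OF p] by simp
    then show ?thesis by (rule inj_on_nth[OF distinct_Seqi[OF pL]])
  qed
  have into: "(\<lambda>q. Seqi m n i p ! q) \<in> Q \<rightarrow> I" if p: "p < N" for p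
  proof
    fix q assume q: "q \<in> Q"
    have pL: "p < length (Lidx m n i)" using p N(1) by simp
    have "q < length (Seqi m n i p)" using q unfolding Q_def lenS[OF p] by simp
    then have "Seqi m n i p ! q \<in> set (Seqi m n i p)" by (rule nth_mem)
    then show "Seqi m n i p ! q \<in> I" unfolding I_def by (rule subsetD[OF set_Seqi[OF pL i]])
  qed
  have Tm: "Theta g (n i) (N - 1) k \<in> borel_measurable (PiM Q (\<lambda>_. M))" if k: "k < K" for k
    unfolding Q_def by (rule Theta_meas[OF k r g])
  have int: "integrable (P I) (\<lambda>\<omega>. Theta g (n i) (N - 1) k (\<lambda>q\<in>Q. \<omega> (Seqi m n i p ! q)))"
    if p: "p < N" and k: "k < K" for p k
  proof (rule bnd_int[where B=1])
    show "finite_measure (P I)" using prob_P by (rule prob_space.finite_measure)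
    show "(\<lambda>\<omega>. Theta g (n i) (N - 1) k (\<lambda>q\<in>Q. \<omega> (Seqi m n i p ! q))) \<in> borel_measurable (P I)"
      using measurable_comp[OF meas_reidx[OF into[OF p]] Tm[OF k]] by (simp add: comp_def)
    fix \<omega> assume "\<omega> \<in> space (P I)"
    then have "(\<lambda>q\<in>Q. \<omega> (Seqi m n i p ! q)) \<in> space (PiM Q (\<lambda>_. M))"
      using measurable_space[OF meas_reidx[OF into[OF p]]] by blast
    then show "\<bar>Theta g (n i) (N - 1) k (\<lambda>q\<in>Q. \<omega> (Seqi m n i p ! q))\<bar> \<le> 1"
      unfolding Q_def by (rule Theta_bnd[OF k r g])
  qed
  have eq: "(\<integral>\<omega>. Theta g (n i) (N - 1) k (\<lambda>q\<in>Q. \<omega> (Seqi m n i p ! q)) \<partial>P I) = Lossk g (n i) (N - 1) k"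
    if p: "p < N" and k: "k < K" for p k
    unfolding Lossk_def Q_def[symmetric]
    by (rule integral_reindex[OF inj[OF p] into[OF p] Tm[OF k]])
  define f where "f p k \<omega> = Theta g (n i) (N - 1) k (\<lambda>q\<in>Q. \<omega> (Seqi m n i p ! q))" for p k \<omega>
  have n1: "1 \<le> N" using N by simp
  have pw: "mech_loss K \<phi> h (((\<lambda>_. id)(i := g)) i (agent_data n i \<omega>)) (others_sub m ((\<lambda>_. id)(i := g)) n i \<omega>)
    = (1 / real N) * (\<Sum>p<N. (1 / real K) * (\<Sum>k<K. f p k \<omega>))" for \<omega>
    unfolding f_def Q_def by (rule pointwise_EL[OF N(1) n1])
  have intp: "integrable (P I) (\<lambda>\<omega>. (1 / real K) * (\<Sum>k<K. f p k \<omega>))" if p: "p < N" for p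
  proof -
    have "integrable (P I) (\<lambda>\<omega>. \<Sum>k<K. f p k \<omega>)"
      using int[OF p] unfolding f_def by (intro Bochner_Integration.integrable_sum) auto
    then show ?thesis by (rule integrable_mult_right)
  qed
  have "expected_loss Prior K \<phi> h m ((\<lambda>_. id)(i := g)) n i =
     (\<integral>\<omega>. (1 / real N) * (\<Sum>p<N. (1 / real K) * (\<Sum>k<K. f p k \<omega>)) \<partial>P I)"
    unfolding expected_loss_def data_P I_def[symmetric] by (simp only: pw)
  also have "\<dots> = (1 / real N) * (\<Sum>p<N. (\<integral>\<omega>. (1 / real K) * (\<Sum>k<K. f p k \<omega>) \<partial>P I))"
  proof -
    have "\<And>p. p \<in> {..<N} \<Longrightarrow> integrable (P I) (\<lambda>\<omega>. (1 / real K) * (\<Sum>k<K. f p k \<omega>))"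
      using intp by simp
    then show ?thesis by (simp only: integral_mult_right_zero Bochner_Integration.integral_sum)
  qed
  also have "\<dots> = (1 / real N) * (\<Sum>p<N. (1 / real K) * (\<Sum>k<K. (\<integral>\<omega>. f p k \<omega> \<partial>P I)))"
  proof -
    have "(\<integral>\<omega>. (1 / real K) * (\<Sum>k<K. f p k \<omega>) \<partial>P I) = (1 / real K) * (\<Sum>k<K. (\<integral>\<omega>. f p k \<omega> \<partial>P I))"
      if p: "p < N" for p
    proof -
      have "\<And>k. k \<in> {..<K} \<Longrightarrow> integrable (P I) (\<lambda>\<omega>. f p k \<omega>)"
        using int[OF p] unfolding f_def by simp
      then show ?thesis by (simp only: integral_mult_right_zero Bochner_Integration.integral_sum)
    qed
    then show ?thesis by (intro arg_cong[where f="\<lambda>x. (1 / real N) * x"] sum.cong) auto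
  qed
  also have "\<dots> = (1 / real N) * (\<Sum>p<N. (1 / real K) * (\<Sum>k<K. Lossk g (n i) (N - 1) k))"
    using eq unfolding f_def by (intro arg_cong[where f="\<lambda>x. (1 / real N) * x"] sum.cong arg_cong[where f="\<lambda>x. (1 / real K) * x"]) auto
  also have "\<dots> = (1 / real K) * (\<Sum>k<K. Lossk g (n i) (N - 1) k)"
    using N by simp
  finally show ?thesis .
qed


definition Tm :: "nat \<Rightarrow> nat \<Rightarrow> (nat \<Rightarrow> 'a) \<Rightarrow> 'a list \<times> real" where
  "Tm j k \<omega> = (map \<omega> [0..<j], \<phi> k (\<omega> j))"

lemma Tm_meas: "k < K \<Longrightarrow> Tm j k \<in> P {..<j + 1 + r} \<rightarrow>\<^sub>M listM M \<Otimes>\<^sub>M borel"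
proof -
  assume k: "k < K"
  have "Tm j k \<in> PiM {..<j + 1 + r} (\<lambda>_. M) \<rightarrow>\<^sub>M listM M \<Otimes>\<^sub>M borel"
    unfolding Tm_def[abs_def] by (rule measurable_Pair[OF Y_meas T_meas[OF k]])
  then show ?thesis using measurable_cong_sets[OF sets_P refl] by blast
qed

lemma orth_H:
  assumes k: "k < K" and r: "1 \<le> r"
    and w: "w \<in> listM M \<Otimes>\<^sub>M borel \<rightarrow>\<^sub>M borel"
    and wb: "\<And>xs t. xs \<in> lists (space M) \<Longrightarrow> length xs = j \<Longrightarrow> \<bar>w (xs, t)\<bar> \<le> 1"
  shows "(\<integral>\<omega>. (w (Tm j k \<omega>) - ecdf (map (\<phi> k) (map \<omega> [j + 1..<j + 1 + r])) (\<phi> k (\<omega> j)))\<^sup>2 \<partial>P {..<j + 1 + r})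
    = (\<integral>\<omega>. (w (Tm j k \<omega>) - h k j r (map \<omega> [0..<j]) (\<phi> k (\<omega> j)))\<^sup>2 \<partial>P {..<j + 1 + r})
      + Lossk id j r k"
proof -
  define H where "H = P {..<j + 1 + r}"
  define S where "S = vimage_algebra (space H) (Tm j k) (listM M \<Otimes>\<^sub>M borel)"
  have TmH: "Tm j k \<in> H \<rightarrow>\<^sub>M listM M \<Otimes>\<^sub>M borel" unfolding H_def by (rule Tm_meas[OF k])
  have sfs: "sigma_finite_subalgebra H S" unfolding S_def H_def
    by (rule sfs_vimage[OF prob_P Tm_meas[OF k]])
  have fin: "finite_measure H" unfolding H_def using prob_P by (rule prob_space.finite_measure)
  have TmS: "Tm j k \<in> S \<rightarrow>\<^sub>M listM M \<Otimes>\<^sub>M borel" unfolding S_def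
    by (rule measurable_vimage_algebra1) (use measurable_space[OF TmH] in blast)
  have uS: "(\<lambda>\<omega>. h k j r (map \<omega> [0..<j]) (\<phi> k (\<omega> j))) \<in> borel_measurable S"
    using measurable_comp[OF TmS h_meas[OF k r]] by (simp add: comp_def Tm_def)
  have WS: "(\<lambda>\<omega>. w (Tm j k \<omega>)) \<in> borel_measurable S"
    using measurable_comp[OF TmS w] by (simp add: comp_def)
  have FH: "(\<lambda>\<omega>. ecdf (map (\<phi> k) (map \<omega> [j + 1..<j + 1 + r])) (\<phi> k (\<omega> j))) \<in> borel_measurable H"
    using F_meas[OF k] measurable_cong_sets[OF sets_P refl] unfolding H_def by blast
  have lists: "map \<omega> [0..<j] \<in> lists (space M)" if "\<omega> \<in> space H" for \<omega>
    using that unfolding H_def space_P by (rule map_in_lists) auto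
  have ce: "AE \<omega> in H. h k j r (map \<omega> [0..<j]) (\<phi> k (\<omega> j)) =
      real_cond_exp H S (\<lambda>\<omega>. ecdf (map (\<phi> k) (map \<omega> [j + 1..<j + 1 + r])) (\<phi> k (\<omega> j))) \<omega>"
    using h_ce[OF k r] unfolding H_def S_def Tm_def[abs_def] .
  have bF: "\<bar>ecdf (map (\<phi> k) (map \<omega> [j + 1..<j + 1 + r])) (\<phi> k (\<omega> j))\<bar> \<le> 1" for \<omega>
    using ecdf_bounds by (simp add: abs_le_iff)
  have bu: "\<bar>h k j r (map \<omega> [0..<j]) (\<phi> k (\<omega> j))\<bar> \<le> 1" if "\<omega> \<in> space H" for \<omega>
    using h_bnd[OF k r lists[OF that], of "\<phi> k (\<omega> j)"] by simp
  have bW: "\<bar>w (Tm j k \<omega>)\<bar> \<le> 1" if "\<omega> \<in> space H" for \<omega>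
    unfolding Tm_def by (rule wb[OF lists[OF that]]) simp
  have "(\<integral>\<omega>. (w (Tm j k \<omega>) - ecdf (map (\<phi> k) (map \<omega> [j + 1..<j + 1 + r])) (\<phi> k (\<omega> j)))\<^sup>2 \<partial>H)
    = (\<integral>\<omega>. (w (Tm j k \<omega>) - h k j r (map \<omega> [0..<j]) (\<phi> k (\<omega> j)))\<^sup>2 \<partial>H)
      + (\<integral>\<omega>. (h k j r (map \<omega> [0..<j]) (\<phi> k (\<omega> j)) - ecdf (map (\<phi> k) (map \<omega> [j + 1..<j + 1 + r])) (\<phi> k (\<omega> j)))\<^sup>2 \<partial>H)"
    by (rule orth[OF sfs fin FH uS WS bF bu bW ce])
  moreover have "Lossk id j r k = (\<integral>\<omega>. (h k j r (map \<omega> [0..<j]) (\<phi> k (\<omega> j)) - ecdf (map (\<phi> k) (map \<omega> [j + 1..<j + 1 + r])) (\<phi> k (\<omega> j)))\<^sup>2 \<partial>H)"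
    unfolding Lossk_def Theta_def H_def by simp
  ultimately show ?thesis unfolding H_def by simp
qed

lemma part1:
  assumes k: "k < K" and r: "1 \<le> r" and f: "f \<in> listM M \<rightarrow>\<^sub>M listM M"
  shows "Lossk id j r k \<le> Lossk f j r k"
proof -
  define w where "w = (\<lambda>(xs, t). h k (length (f xs)) r (f xs) t)"
  have fp: "(\<lambda>(xs, t). (f xs, t)) \<in> listM M \<Otimes>\<^sub>M borel \<rightarrow>\<^sub>M listM M \<Otimes>\<^sub>M (borel :: real measure)"
    using f by measurable
  have wm: "w \<in> listM M \<Otimes>\<^sub>M borel \<rightarrow>\<^sub>M borel"
    using measurable_comp[OF fp h_len_meas[OF k r]] unfolding w_def by (simp add: comp_def case_prod_beta')
  have wb: "\<bar>w (xs, t)\<bar> \<le> 1" if "xs \<in> lists (space M)" "length xs = j" for xs t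
  proof -
    have "f xs \<in> lists (space M)" using measurable_space[OF f] that(1) by (auto simp: space_listM)
    then show ?thesis using h_bnd[OF k r, of "f xs" t] unfolding w_def by simp
  qed
  have "Lossk f j r k = (\<integral>\<omega>. (w (Tm j k \<omega>) - ecdf (map (\<phi> k) (map \<omega> [j + 1..<j + 1 + r])) (\<phi> k (\<omega> j)))\<^sup>2 \<partial>P {..<j + 1 + r})"
    unfolding Lossk_def Theta_def w_def Tm_def by simp
  also have "\<dots> = (\<integral>\<omega>. (w (Tm j k \<omega>) - h k j r (map \<omega> [0..<j]) (\<phi> k (\<omega> j)))\<^sup>2 \<partial>P {..<j + 1 + r}) + Lossk id j r k"
    by (rule orth_H[OF k r wm wb])
  also have "\<dots> \<ge> Lossk id j r k"
    by (simp add: integral_nonneg_AE)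
  finally show ?thesis .
qed


lemma take_meas: "(\<lambda>xs. take c xs) \<in> listM M \<rightarrow>\<^sub>M listM M"
proof (rule listM_in)
  fix n
  have "(\<lambda>x. map x [0..<min c n]) \<in> PiM {..<n} (\<lambda>_. M) \<rightarrow>\<^sub>M listM M"
    by (rule map_meas) auto
  moreover have "take c (map x [0..<n]) = map x [0..<min c n]" for x :: "nat \<Rightarrow> 'a"
    by (cases "c \<le> n") (simp_all add: take_map min_def del: upt_Suc)
  ultimately show "(\<lambda>x. take c (map x [0..<n])) \<in> PiM {..<n} (\<lambda>_. M) \<rightarrow>\<^sub>M listM M" by simp
qed

definition Wc :: "nat \<Rightarrow> nat \<Rightarrow> nat \<Rightarrow> (nat \<Rightarrow> 'a) \<Rightarrow> real" where
  "Wc c r k \<omega> = h k c r (map \<omega> [0..<c]) (\<phi> k (\<omega> (Suc c)))"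

definition Uc :: "nat \<Rightarrow> nat \<Rightarrow> nat \<Rightarrow> (nat \<Rightarrow> 'a) \<Rightarrow> real" where
  "Uc c r k \<omega> = h k (Suc c) r (map \<omega> [0..<Suc c]) (\<phi> k (\<omega> (Suc c)))"

lemma step_eq:
  assumes k: "k < K" and r: "1 \<le> r"
  shows "Lossk id c r k = (\<integral>\<omega>. (Wc c r k \<omega> - Uc c r k \<omega>)\<^sup>2 \<partial>P {..<Suc c + 1 + r}) + Lossk id (Suc c) r k"
proof -
  define w where "w = (\<lambda>(xs, t). h k c r (take c xs) t)"
  have tp: "(\<lambda>(xs, t). (take c xs, t)) \<in> listM M \<Otimes>\<^sub>M borel \<rightarrow>\<^sub>M listM M \<Otimes>\<^sub>M (borel :: real measure)"
    using take_meas by measurable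
  have wm: "w \<in> listM M \<Otimes>\<^sub>M borel \<rightarrow>\<^sub>M borel"
    using measurable_comp[OF tp h_meas[OF k r]] unfolding w_def by (simp add: comp_def case_prod_beta')
  have wb: "\<bar>w (xs, t)\<bar> \<le> 1" if "xs \<in> lists (space M)" "length xs = Suc c" for xs t
  proof -
    have "take c xs \<in> lists (space M)" "length (take c xs) = c" using that by (auto dest: in_set_takeD)
    then show ?thesis using h_bnd[OF k r, of "take c xs" t] unfolding w_def by simp
  qed
  define \<pi> where "\<pi> q = (if q < c then q else Suc q)" for q
  have inj: "inj_on \<pi> {..<c + 1 + r}" unfolding \<pi>_def inj_on_def by auto
  have into: "\<pi> \<in> {..<c + 1 + r} \<rightarrow> {..<Suc c + 1 + r}" unfolding \<pi>_def by auto
  have Tm: "Theta id c r k \<in> borel_measurable (PiM {..<c + 1 + r} (\<lambda>_. M))"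
    by (rule Theta_meas[OF k r]) simp
  have pw: "Theta id c r k (\<lambda>q\<in>{..<c + 1 + r}. \<omega> (\<pi> q)) =
      (w (Tm (Suc c) k \<omega>) - ecdf (map (\<phi> k) (map \<omega> [Suc c + 1..<Suc c + 1 + r])) (\<phi> k (\<omega> (Suc c))))\<^sup>2" for \<omega>
  proof -
    define \<omega>' where "\<omega>' = (\<lambda>q\<in>{..<c + 1 + r}. \<omega> (\<pi> q))"
    have A: "map \<omega>' [0..<c] = map \<omega> [0..<c]" unfolding \<omega>'_def \<pi>_def by (intro map_cong) auto
    have B: "\<omega>' c = \<omega> (Suc c)" unfolding \<omega>'_def \<pi>_def by simp
    have "map \<omega>' [c + 1..<c + 1 + r] = map (\<lambda>q. \<omega> (Suc q)) [c + 1..<c + 1 + r]"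
      unfolding \<omega>'_def \<pi>_def by (intro map_cong) auto
    also have "\<dots> = map \<omega> [Suc c + 1..<Suc c + 1 + r]"
    proof -
      have "map \<omega> [Suc c + 1..<Suc c + 1 + r] = map \<omega> (map Suc [c + 1..<c + 1 + r])"
        by (simp only: map_Suc_upt) simp
      then show ?thesis by simp
    qed
    finally have C: "map \<omega>' [c + 1..<c + 1 + r] = map \<omega> [Suc c + 1..<Suc c + 1 + r]" .
    have D: "w (Tm (Suc c) k \<omega>) = h k c r (map \<omega> [0..<c]) (\<phi> k (\<omega> (Suc c)))"
      unfolding w_def Tm_def by (simp add: take_map take_upt del: upt_Suc)
    show ?thesis unfolding \<omega>'_def[symmetric] Theta_def A B C D by simp
  qed
  have "Lossk id c r k = (\<integral>\<omega>. Theta id c r k (\<lambda>q\<in>{..<c + 1 + r}. \<omega> (\<pi> q)) \<partial>P {..<Suc c + 1 + r})"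
    unfolding Lossk_def by (rule integral_reindex[OF inj into Tm, symmetric])
  also have "\<dots> = (\<integral>\<omega>. (w (Tm (Suc c) k \<omega>) - ecdf (map (\<phi> k) (map \<omega> [Suc c + 1..<Suc c + 1 + r])) (\<phi> k (\<omega> (Suc c))))\<^sup>2 \<partial>P {..<Suc c + 1 + r})"
    unfolding pw ..
  also have "\<dots> = (\<integral>\<omega>. (w (Tm (Suc c) k \<omega>) - h k (Suc c) r (map \<omega> [0..<Suc c]) (\<phi> k (\<omega> (Suc c))))\<^sup>2 \<partial>P {..<Suc c + 1 + r}) + Lossk id (Suc c) r k"
    by (rule orth_H[OF k r wm wb])
  also have "(\<lambda>\<omega>. (w (Tm (Suc c) k \<omega>) - h k (Suc c) r (map \<omega> [0..<Suc c]) (\<phi> k (\<omega> (Suc c))))\<^sup>2)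
      = (\<lambda>\<omega>. (Wc c r k \<omega> - Uc c r k \<omega>)\<^sup>2)"
    unfolding w_def Tm_def Wc_def Uc_def by (simp add: take_map take_upt del: upt_Suc)
  finally show ?thesis .
qed


definition tau :: "nat \<Rightarrow> nat \<Rightarrow> nat \<Rightarrow> nat" where
  "tau n s q = (if q < n then q + 2 else if q = n then 0 else if q = n + 1 + s then 1 else q + 2)"

lemma inj_tau: "inj_on (tau n s) J"
  unfolding inj_on_def tau_def by (auto split: if_splits)

lemma map_shift2: "map \<omega> [2..<n + 2] = map (\<lambda>q. \<omega> (q + 2)) [0..<n]"
proof -
  have "[2..<n + 2] = map (\<lambda>i. i + 2) [0..<n]" by (simp only: map_add_upt)
  then show ?thesis by simp
qed

lemma tau_facts:
  assumes s: "s < r"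
  shows "(\<lambda>q\<in>{..<n + 1 + r}. \<omega> (tau n s q)) n = \<omega> 0"
    and "(\<lambda>q\<in>{..<n + 1 + r}. \<omega> (tau n s q)) (n + 1 + s) = \<omega> 1"
    and "map (\<lambda>q\<in>{..<n + 1 + r}. \<omega> (tau n s q)) [0..<n] = map \<omega> [2..<n + 2]"
  using s unfolding tau_def map_shift2 by (auto intro!: map_cong)

lemma sum_shift_upt: "(\<Sum>q\<in>{a..<a + (r::nat)}. f q) = (\<Sum>s<r. f (a + s))"
  by (induction r) auto

lemma psi_meas:
  assumes k: "k < K"
  shows "(\<lambda>\<omega>. (\<phi> k (\<omega> 0), map \<omega> [2..<n + 2])) \<in> P UNIV \<rightarrow>\<^sub>M borel \<Otimes>\<^sub>M listM M"
proof -
  have a: "(\<lambda>\<omega>. \<phi> k (\<omega> 0)) \<in> borel_measurable (PiM UNIV (\<lambda>_. M))"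
    using measurable_comp[OF measurable_component_singleton[of 0 UNIV "\<lambda>_. M"] phi_meas[OF k]]
    by (simp add: comp_def)
  have r: "(\<lambda>\<omega>. \<lambda>q\<in>{..<n}. \<omega> (q + 2)) \<in> PiM UNIV (\<lambda>_. M) \<rightarrow>\<^sub>M PiM {..<n} (\<lambda>_. M)"
    by (intro measurable_restrict measurable_PiM_component_rev) auto
  have "(\<lambda>\<omega>. map (\<lambda>q\<in>{..<n}. \<omega> (q + 2)) [0..<n]) \<in> PiM UNIV (\<lambda>_. M) \<rightarrow>\<^sub>M listM M"
    using measurable_comp[OF r listM_out] by (simp add: comp_def)
  moreover have "map (\<lambda>q\<in>{..<n}. \<omega> (q + 2)) [0..<n] = map \<omega> [2..<n + 2]" for \<omega> :: "nat \<Rightarrow> 'a"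
    unfolding map_shift2 by (intro map_cong) auto
  ultimately have b: "(\<lambda>\<omega>. map \<omega> [2..<n + 2]) \<in> PiM UNIV (\<lambda>_. M) \<rightarrow>\<^sub>M listM M" by simp
  have "(\<lambda>\<omega>. (\<phi> k (\<omega> 0), map \<omega> [2..<n + 2])) \<in> PiM UNIV (\<lambda>_. M) \<rightarrow>\<^sub>M borel \<Otimes>\<^sub>M listM M"
    by (rule measurable_Pair[OF a b])
  then show ?thesis using measurable_cong_sets[OF sets_P refl] by blast
qed


lemma key_int:
  assumes k: "k < K" and r: "1 \<le> r" and B: "B \<in> sets (borel \<Otimes>\<^sub>M listM M)"
  shows "(\<integral>\<omega>. indicator B (\<phi> k (\<omega> 0), map \<omega> [2..<n + 2]) * (indicator {\<omega>. \<phi> k (\<omega> 1) \<le> \<phi> k (\<omega> 0)} \<omega> :: real) \<partial>P UNIV)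
       = (\<integral>\<omega>. indicator B (\<phi> k (\<omega> 0), map \<omega> [2..<n + 2]) * h k n r (map \<omega> [2..<n + 2]) (\<phi> k (\<omega> 0)) \<partial>P UNIV)"
proof -
  define J where "J = {..<n + 1 + r}"
  define H where "H = P J"
  define LHS where "LHS = (\<integral>\<omega>. indicator B (\<phi> k (\<omega> 0), map \<omega> [2..<n + 2]) * (indicator {\<omega>. \<phi> k (\<omega> 1) \<le> \<phi> k (\<omega> 0)} \<omega> :: real) \<partial>P UNIV)"
  define Vb :: "(nat \<Rightarrow> 'a) \<Rightarrow> real" where "Vb \<omega>' = indicator B (\<phi> k (\<omega>' n), map \<omega>' [0..<n])" for \<omega>'
  define Is :: "nat \<Rightarrow> (nat \<Rightarrow> 'a) \<Rightarrow> real" where "Is s \<omega>' = (if \<phi> k (\<omega>' (n + 1 + s)) \<le> \<phi> k (\<omega>' n) then 1 else 0)" for s \<omega>'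
  define F where "F \<omega>' = ecdf (map (\<phi> k) (map \<omega>' [n + 1..<n + 1 + r])) (\<phi> k (\<omega>' n))" for \<omega>'
  define u where "u \<omega>' = h k n r (map \<omega>' [0..<n]) (\<phi> k (\<omega>' n))" for \<omega>'
  have into: "tau n s \<in> J \<rightarrow> UNIV" for s by simp
  have sw: "(\<lambda>(xs, t). (t, xs)) \<in> listM M \<Otimes>\<^sub>M borel \<rightarrow>\<^sub>M (borel :: real measure) \<Otimes>\<^sub>M listM M"
    by measurable
  have Vbm0: "(\<lambda>p. indicator B ((\<lambda>(xs, t). (t, xs)) p) :: real) \<in> borel_measurable (listM M \<Otimes>\<^sub>M borel)"
    using measurable_comp[OF sw borel_measurable_indicator[OF B]] by (simp add: comp_def)
  have TmJ: "Tm n k \<in> PiM J (\<lambda>_. M) \<rightarrow>\<^sub>M listM M \<Otimes>\<^sub>M borel"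
    unfolding J_def Tm_def[abs_def] by (rule measurable_Pair[OF Y_meas T_meas[OF k]])
  have Vb_Tm: "Vb = (\<lambda>\<omega>'. indicator B ((\<lambda>(xs, t). (t, xs)) (Tm n k \<omega>')))"
    unfolding Vb_def Tm_def by simp
  have Vbm: "Vb \<in> borel_measurable (PiM J (\<lambda>_. M))"
    unfolding Vb_Tm using measurable_comp[OF TmJ Vbm0] by (simp add: comp_def)
  have Ism: "Is s \<in> borel_measurable (PiM J (\<lambda>_. M))" if s: "s < r" for s
  proof -
    have "n + 1 + s \<in> J" "n \<in> J" using s unfolding J_def by auto
    then have "(\<lambda>\<omega>. \<phi> k (\<omega> (n + 1 + s))) \<in> borel_measurable (PiM J (\<lambda>_. M))"
         "(\<lambda>\<omega>. \<phi> k (\<omega> n)) \<in> borel_measurable (PiM J (\<lambda>_. M))"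
      using measurable_comp[OF measurable_component_singleton[of _ J "\<lambda>_. M"] phi_meas[OF k]] by (auto simp: comp_def)
    then show ?thesis unfolding Is_def[abs_def] by measurable
  qed
  have K1: "(\<integral>\<omega>'. Vb \<omega>' * Is s \<omega>' \<partial>H) = LHS" if s: "s < r" for s
  proof -
    have m: "(\<lambda>\<omega>'. Vb \<omega>' * Is s \<omega>') \<in> borel_measurable (PiM J (\<lambda>_. M))"
      using Vbm Ism[OF s] by measurable
    have "(\<integral>\<omega>'. Vb \<omega>' * Is s \<omega>' \<partial>H) = (\<integral>\<omega>. (\<lambda>\<omega>'. Vb \<omega>' * Is s \<omega>') (\<lambda>q\<in>J. \<omega> (tau n s q)) \<partial>P UNIV)"
      unfolding H_def by (rule integral_reindex[OF inj_tau into m, symmetric])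
    also have "\<dots> = LHS"
    proof -
      have pw: "Vb (\<lambda>q\<in>J. \<omega> (tau n s q)) * Is s (\<lambda>q\<in>J. \<omega> (tau n s q)) =
          indicator B (\<phi> k (\<omega> 0), map \<omega> [2..<n + 2]) * (indicator {\<omega>. \<phi> k (\<omega> 1) \<le> \<phi> k (\<omega> 0)} \<omega> :: real)" for \<omega>
      proof -
        have e1: "(\<lambda>q\<in>J. \<omega> (tau n s q)) n = \<omega> 0" unfolding J_def by (rule tau_facts(1)[OF s])
        have e2: "(\<lambda>q\<in>J. \<omega> (tau n s q)) (n + 1 + s) = \<omega> 1" unfolding J_def by (rule tau_facts(2)[OF s])
        have e3: "map (\<lambda>q\<in>J. \<omega> (tau n s q)) [0..<n] = map \<omega> [2..<n + 2]" unfolding J_def by (rule tau_facts(3)[OF s])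
        show ?thesis unfolding Vb_def Is_def e1 e2 e3 by (simp add: indicator_def)
      qed
      show ?thesis unfolding pw LHS_def ..
    qed
    finally show ?thesis .
  qed
  have K2: "F \<omega>' = (\<Sum>s<r. Is s \<omega>') / real r" for \<omega>'
  proof -
    have "F \<omega>' = (\<Sum>q\<in>{n + 1..<n + 1 + r}. if \<phi> k (\<omega>' q) \<le> \<phi> k (\<omega>' n) then 1 else 0) / real (n + 1 + r - (n + 1))"
      unfolding F_def using ecdf_upt[of "\<lambda>q. \<phi> k (\<omega>' q)" "n + 1" "n + 1 + r" "\<phi> k (\<omega>' n)"] by (simp add: comp_def)
    also have "\<dots> = (\<Sum>s<r. Is s \<omega>') / real r" unfolding sum_shift_upt Is_def by simp
    finally show ?thesis .
  qed
  have fin: "finite_measure H" unfolding H_def using prob_P by (rule prob_space.finite_measure)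
  have bVb: "\<bar>Vb \<omega>'\<bar> \<le> 1" for \<omega>' unfolding Vb_def by (simp add: indicator_def)
  have bIs: "\<bar>Is s \<omega>'\<bar> \<le> 1" for s \<omega>' unfolding Is_def by simp
  have VbH: "Vb \<in> borel_measurable H" using Vbm measurable_cong_sets[OF sets_P refl] unfolding H_def by blast
  have IsH: "Is s \<in> borel_measurable H" if "s < r" for s
    using Ism[OF that] measurable_cong_sets[OF sets_P refl] unfolding H_def by blast
  have intIs: "integrable H (\<lambda>\<omega>'. Vb \<omega>' * Is s \<omega>')" if s: "s < r" for s
  proof (rule bnd_int[OF fin _, where B=1])
    show "(\<lambda>\<omega>'. Vb \<omega>' * Is s \<omega>') \<in> borel_measurable H" using VbH IsH[OF s] by measurable
    fix \<omega>' show "\<bar>Vb \<omega>' * Is s \<omega>'\<bar> \<le> 1"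
      using bVb[of \<omega>'] bIs[of s \<omega>'] by (simp add: abs_mult mult_le_one)
  qed
  have K4: "(\<integral>\<omega>'. Vb \<omega>' * F \<omega>' \<partial>H) = LHS"
  proof -
    have "(\<integral>\<omega>'. Vb \<omega>' * F \<omega>' \<partial>H) = (\<integral>\<omega>'. (\<Sum>s<r. Vb \<omega>' * Is s \<omega>') / real r \<partial>H)"
      unfolding K2 by (simp add: sum_distrib_left)
    also have "\<dots> = (\<Sum>s<r. (\<integral>\<omega>'. Vb \<omega>' * Is s \<omega>' \<partial>H)) / real r"
    proof -
      have "\<And>s. s \<in> {..<r} \<Longrightarrow> integrable H (\<lambda>\<omega>'. Vb \<omega>' * Is s \<omega>')" using intIs by simp
      then show ?thesis by (simp only: integral_divide_zero Bochner_Integration.integral_sum)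
    qed
    also have "\<dots> = LHS" using K1 r by simp
    finally show ?thesis .
  qed
  define S where "S = vimage_algebra (space H) (Tm n k) (listM M \<Otimes>\<^sub>M borel)"
  have sfs: "sigma_finite_subalgebra H S" unfolding S_def H_def J_def
    by (rule sfs_vimage[OF prob_P Tm_meas[OF k]])
  have TmH: "Tm n k \<in> H \<rightarrow>\<^sub>M listM M \<Otimes>\<^sub>M borel" unfolding H_def J_def by (rule Tm_meas[OF k])
  have TmS: "Tm n k \<in> S \<rightarrow>\<^sub>M listM M \<Otimes>\<^sub>M borel" unfolding S_def
    by (rule measurable_vimage_algebra1) (use measurable_space[OF TmH] in blast)
  have VbS: "Vb \<in> borel_measurable S"
    unfolding Vb_Tm using measurable_comp[OF TmS Vbm0] by (simp add: comp_def)
  have FH: "F \<in> borel_measurable H" using F_meas[OF k] measurable_cong_sets[OF sets_P refl]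
    unfolding H_def J_def F_def[abs_def] by blast
  have bF: "\<bar>F \<omega>'\<bar> \<le> 1" for \<omega>' unfolding F_def using ecdf_bounds by (simp add: abs_le_iff)
  have intVF: "integrable H (\<lambda>\<omega>'. Vb \<omega>' * F \<omega>')"
  proof (rule bnd_int[OF fin _, where B=1])
    show "(\<lambda>\<omega>'. Vb \<omega>' * F \<omega>') \<in> borel_measurable H" using VbH FH by measurable
    fix \<omega>' show "\<bar>Vb \<omega>' * F \<omega>'\<bar> \<le> 1"
      using bVb[of \<omega>'] bF[of \<omega>'] by (simp add: abs_mult mult_le_one)
  qed
  have ce: "AE \<omega>' in H. u \<omega>' = real_cond_exp H S F \<omega>'"
    using h_ce[OF k r, of n] unfolding H_def S_def J_def u_def F_def[abs_def] Tm_def[abs_def] .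
  have K3: "(\<integral>\<omega>'. Vb \<omega>' * u \<omega>' \<partial>H) = (\<integral>\<omega>'. Vb \<omega>' * F \<omega>' \<partial>H)"
  proof -
    interpret sigma_finite_subalgebra H S by (rule sfs)
    have "(\<integral>\<omega>'. Vb \<omega>' * u \<omega>' \<partial>H) = (\<integral>\<omega>'. Vb \<omega>' * real_cond_exp H S F \<omega>' \<partial>H)"
    proof (rule integral_cong_AE)
      have uH: "u \<in> borel_measurable H"
      proof -
        have "u = (\<lambda>(xs, t). h k n r xs t) \<circ> Tm n k" unfolding u_def Tm_def by (simp add: comp_def)
        then show ?thesis using measurable_comp[OF TmH h_meas[OF k r]] by simp
      qed
      show "(\<lambda>\<omega>'. Vb \<omega>' * u \<omega>') \<in> borel_measurable H" using VbH uH by measurable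
      show "(\<lambda>\<omega>'. Vb \<omega>' * real_cond_exp H S F \<omega>') \<in> borel_measurable H"
        using VbH borel_measurable_cond_exp2 by measurable
      show "AE \<omega>' in H. Vb \<omega>' * u \<omega>' = Vb \<omega>' * real_cond_exp H S F \<omega>'" using ce by auto
    qed
    also have "\<dots> = (\<integral>\<omega>'. Vb \<omega>' * F \<omega>' \<partial>H)"
      by (rule real_cond_exp_intg(2)[OF intVF VbS FH])
    finally show ?thesis .
  qed
  have K5: "(\<integral>\<omega>. indicator B (\<phi> k (\<omega> 0), map \<omega> [2..<n + 2]) * h k n r (map \<omega> [2..<n + 2]) (\<phi> k (\<omega> 0)) \<partial>P UNIV)
      = (\<integral>\<omega>'. Vb \<omega>' * u \<omega>' \<partial>H)"
  proof -
    have uJ: "u \<in> borel_measurable (PiM J (\<lambda>_. M))"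
    proof -
      have "u = (\<lambda>(xs, t). h k n r xs t) \<circ> Tm n k" unfolding u_def Tm_def by (simp add: comp_def)
      then show ?thesis using measurable_comp[OF TmJ h_meas[OF k r]] by simp
    qed
    have m: "(\<lambda>\<omega>'. Vb \<omega>' * u \<omega>') \<in> borel_measurable (PiM J (\<lambda>_. M))" using Vbm uJ by measurable
    have "(\<integral>\<omega>'. Vb \<omega>' * u \<omega>' \<partial>H) = (\<integral>\<omega>. (\<lambda>\<omega>'. Vb \<omega>' * u \<omega>') (\<lambda>q\<in>J. \<omega> (tau n 0 q)) \<partial>P UNIV)"
      unfolding H_def by (rule integral_reindex[OF inj_tau into m, symmetric])
    also have "\<dots> = (\<integral>\<omega>. indicator B (\<phi> k (\<omega> 0), map \<omega> [2..<n + 2]) * h k n r (map \<omega> [2..<n + 2]) (\<phi> k (\<omega> 0)) \<partial>P UNIV)"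
    proof -
      have s0: "0 < r" using r by simp
      have pw: "Vb (\<lambda>q\<in>J. \<omega> (tau n 0 q)) * u (\<lambda>q\<in>J. \<omega> (tau n 0 q)) =
          indicator B (\<phi> k (\<omega> 0), map \<omega> [2..<n + 2]) * h k n r (map \<omega> [2..<n + 2]) (\<phi> k (\<omega> 0))" for \<omega>
      proof -
        have e1: "(\<lambda>q\<in>J. \<omega> (tau n 0 q)) n = \<omega> 0" unfolding J_def by (rule tau_facts(1)[OF s0])
        have e3: "map (\<lambda>q\<in>J. \<omega> (tau n 0 q)) [0..<n] = map \<omega> [2..<n + 2]" unfolding J_def by (rule tau_facts(3)[OF s0])
        show ?thesis unfolding Vb_def u_def e1 e3 ..
      qed
      show ?thesis unfolding pw ..
    qed
    finally show ?thesis by simp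
  qed
  show ?thesis using K5 K3 K4 unfolding LHS_def by simp
qed


lemma claimA:
  assumes k: "k < K" and r: "1 \<le> r"
  shows "AE \<omega> in P UNIV. real_cond_exp (P UNIV) (cond_sigma M Prior (\<phi> k) n)
      (indicator {\<omega>. \<phi> k (\<omega> 1) \<le> \<phi> k (\<omega> 0)}) \<omega> = h k n r (map \<omega> [2..<n + 2]) (\<phi> k (\<omega> 0))"
proof -
  define \<psi> where "\<psi> \<omega> = (\<phi> k (\<omega> 0), map \<omega> [2..<n + 2])" for \<omega> :: "nat \<Rightarrow> 'a"
  define \<Omega> where "\<Omega> = P (UNIV :: nat set)"
  define G where "G = cond_sigma M Prior (\<phi> k) n"
  have G_eq: "G = vimage_algebra (space \<Omega>) \<psi> (borel \<Otimes>\<^sub>M listM M)"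
    unfolding G_def cond_sigma_def seq_space_P \<Omega>_def \<psi>_def ..
  have \<psi>m: "\<psi> \<in> \<Omega> \<rightarrow>\<^sub>M borel \<Otimes>\<^sub>M listM M" unfolding \<psi>_def[abs_def] \<Omega>_def by (rule psi_meas[OF k])
  have sfs: "sigma_finite_subalgebra \<Omega> G" unfolding G_eq \<Omega>_def
    using sfs_vimage[OF prob_P \<psi>m[unfolded \<Omega>_def]] .
  interpret sigma_finite_subalgebra \<Omega> G by (rule sfs)
  have \<psi>sp: "\<psi> \<in> space \<Omega> \<rightarrow> space (borel \<Otimes>\<^sub>M listM M)" using measurable_space[OF \<psi>m] by blast
  have \<psi>G: "\<psi> \<in> G \<rightarrow>\<^sub>M borel \<Otimes>\<^sub>M listM M" unfolding G_eq by (rule measurable_vimage_algebra1[OF \<psi>sp])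
  have sw: "(\<lambda>(t, xs). (xs, t)) \<in> (borel :: real measure) \<Otimes>\<^sub>M listM M \<rightarrow>\<^sub>M listM M \<Otimes>\<^sub>M borel"
    by measurable
  have hs: "(\<lambda>(t, xs). h k n r xs t) \<in> borel \<Otimes>\<^sub>M listM M \<rightarrow>\<^sub>M borel"
    using measurable_comp[OF sw h_meas[OF k r]] by (simp add: comp_def case_prod_beta')
  have g_eq: "(\<lambda>\<omega>. h k n r (map \<omega> [2..<n + 2]) (\<phi> k (\<omega> 0))) = (\<lambda>(t, xs). h k n r xs t) \<circ> \<psi>"
    unfolding \<psi>_def by (simp add: comp_def)
  have gG: "(\<lambda>\<omega>. h k n r (map \<omega> [2..<n + 2]) (\<phi> k (\<omega> 0))) \<in> borel_measurable G"
    unfolding g_eq by (rule measurable_comp[OF \<psi>G hs])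
  have gO: "(\<lambda>\<omega>. h k n r (map \<omega> [2..<n + 2]) (\<phi> k (\<omega> 0))) \<in> borel_measurable \<Omega>"
    unfolding g_eq by (rule measurable_comp[OF \<psi>m hs])
  have fin: "finite_measure \<Omega>" unfolding \<Omega>_def using prob_P by (rule prob_space.finite_measure)
  have c01: "(\<lambda>\<omega>. \<phi> k (\<omega> 0)) \<in> borel_measurable \<Omega>" "(\<lambda>\<omega>. \<phi> k (\<omega> 1)) \<in> borel_measurable \<Omega>"
  proof -
    have cm: "(\<lambda>x. \<phi> k (x i)) \<in> borel_measurable (P UNIV)" for i
    proof -
      have "(\<lambda>x. \<phi> k (x i)) \<in> borel_measurable (PiM UNIV (\<lambda>_. M))"
        using measurable_comp[OF measurable_component_singleton[of i UNIV "\<lambda>_. M"] phi_meas[OF k]]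
        by (simp add: comp_def)
      then show ?thesis using measurable_cong_sets[OF sets_P refl] by blast
    qed
    show "(\<lambda>\<omega>. \<phi> k (\<omega> 0)) \<in> borel_measurable \<Omega>" "(\<lambda>\<omega>. \<phi> k (\<omega> 1)) \<in> borel_measurable \<Omega>"
      unfolding \<Omega>_def by (rule cm)+
  qed
  have ind_eq: "indicator {\<omega>. \<phi> k (\<omega> 1) \<le> \<phi> k (\<omega> 0)} = (\<lambda>\<omega>. if \<phi> k (\<omega> 1) \<le> \<phi> k (\<omega> 0) then 1 else (0::real))"
    by (auto simp: indicator_def)
  have indm: "(indicator {\<omega>. \<phi> k (\<omega> 1) \<le> \<phi> k (\<omega> 0)} :: _ \<Rightarrow> real) \<in> borel_measurable \<Omega>"
    unfolding ind_eq using c01 by measurable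
  have int1: "integrable \<Omega> (indicator {\<omega>. \<phi> k (\<omega> 1) \<le> \<phi> k (\<omega> 0)} :: _ \<Rightarrow> real)"
    by (rule bnd_int[OF fin indm, where B=1]) (simp add: indicator_def)
  have int2: "integrable \<Omega> (\<lambda>\<omega>. h k n r (map \<omega> [2..<n + 2]) (\<phi> k (\<omega> 0)))"
  proof (rule bnd_int[OF fin gO, where B=1])
    fix \<omega> assume \<omega>: "\<omega> \<in> space \<Omega>"
    have "map \<omega> [2..<n + 2] \<in> lists (space M)"
    proof -
      have "\<omega> \<in> space (PiM UNIV (\<lambda>_. M))" using \<omega> unfolding \<Omega>_def space_P .
      then have "\<omega> q \<in> space M" for q unfolding space_PiM by auto
      then show ?thesis by auto
    qed
    moreover have "length (map \<omega> [2..<n + 2]) = n" by (simp only: length_map length_upt)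
    ultimately show "\<bar>h k n r (map \<omega> [2..<n + 2]) (\<phi> k (\<omega> 0))\<bar> \<le> 1"
      by (rule h_bnd_abs[OF k r])
  qed
  have "AE \<omega> in \<Omega>. real_cond_exp \<Omega> G (indicator {\<omega>. \<phi> k (\<omega> 1) \<le> \<phi> k (\<omega> 0)}) \<omega>
      = h k n r (map \<omega> [2..<n + 2]) (\<phi> k (\<omega> 0))"
  proof (rule real_cond_exp_charact[OF _ int1 int2 gG])
    fix A assume A: "A \<in> sets G"
    then obtain B where B: "B \<in> sets (borel \<Otimes>\<^sub>M listM M)" and AB: "A = \<psi> -` B \<inter> space \<Omega>"
      unfolding G_eq sets_vimage_algebra2[OF \<psi>sp] by blast
    have iA: "indicator A \<omega> = (indicator B (\<psi> \<omega>) :: real)" if "\<omega> \<in> space \<Omega>" for \<omega>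
      using that unfolding AB by (simp add: indicator_def)
    have "(\<integral>\<omega>\<in>A. indicator {\<omega>. \<phi> k (\<omega> 1) \<le> \<phi> k (\<omega> 0)} \<omega> \<partial>\<Omega>)
        = (\<integral>\<omega>. indicator B (\<phi> k (\<omega> 0), map \<omega> [2..<n + 2]) * (indicator {\<omega>. \<phi> k (\<omega> 1) \<le> \<phi> k (\<omega> 0)} \<omega> :: real) \<partial>P UNIV)"
      unfolding set_lebesgue_integral_def \<Omega>_def[symmetric]
      by (intro Bochner_Integration.integral_cong refl) (simp add: iA \<psi>_def)
    also have "\<dots> = (\<integral>\<omega>. indicator B (\<phi> k (\<omega> 0), map \<omega> [2..<n + 2]) * h k n r (map \<omega> [2..<n + 2]) (\<phi> k (\<omega> 0)) \<partial>P UNIV)"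
      by (rule key_int[OF k r B])
    also have "\<dots> = (\<integral>\<omega>\<in>A. h k n r (map \<omega> [2..<n + 2]) (\<phi> k (\<omega> 0)) \<partial>\<Omega>)"
      unfolding set_lebesgue_integral_def \<Omega>_def[symmetric]
      by (intro Bochner_Integration.integral_cong refl) (simp add: iA \<psi>_def)
    finally show "(\<integral>\<omega>\<in>A. indicator {\<omega>. \<phi> k (\<omega> 1) \<le> \<phi> k (\<omega> 0)} \<omega> \<partial>\<Omega>) =
        (\<integral>\<omega>\<in>A. h k n r (map \<omega> [2..<n + 2]) (\<phi> k (\<omega> 0)) \<partial>\<Omega>)" .
  qed
  then show ?thesis unfolding \<Omega>_def G_def .
qed


lemma strict_step:
  assumes k: "k < K" and r: "1 \<le> r" and nd: "\<not> degenerate M Prior (\<phi> k)"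
  shows "0 < (\<integral>\<omega>. (Wc c r k \<omega> - Uc c r k \<omega>)\<^sup>2 \<partial>P {..<Suc c + 1 + r})"
proof (rule ccontr)
  assume ng: "\<not> 0 < (\<integral>\<omega>. (Wc c r k \<omega> - Uc c r k \<omega>)\<^sup>2 \<partial>P {..<Suc c + 1 + r})"
  define J where "J = {..<Suc c + 1 + r}"
  define H where "H = P J"
  have Wm: "Wc c r k \<in> borel_measurable H"
  proof -
    have a: "(\<lambda>\<omega>. map \<omega> [0..<c]) \<in> PiM J (\<lambda>_. M) \<rightarrow>\<^sub>M listM M" unfolding J_def by (rule map_meas) auto
    have "Suc c \<in> J" unfolding J_def by simp
    from measurable_comp[OF measurable_component_singleton[of "Suc c" J "\<lambda>_. M", OF this] phi_meas[OF k]]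
    have b: "(\<lambda>\<omega>. \<phi> k (\<omega> (Suc c))) \<in> borel_measurable (PiM J (\<lambda>_. M))" unfolding comp_def .
    have "(\<lambda>\<omega>. (map \<omega> [0..<c], \<phi> k (\<omega> (Suc c)))) \<in> PiM J (\<lambda>_. M) \<rightarrow>\<^sub>M listM M \<Otimes>\<^sub>M borel"
      by (rule measurable_Pair[OF a b])
    from measurable_comp[OF this h_meas[OF k r]]
    have "Wc c r k \<in> borel_measurable (PiM J (\<lambda>_. M))" unfolding Wc_def[abs_def] comp_def by simp
    then show ?thesis using measurable_cong_sets[OF sets_P refl] unfolding H_def by blast
  qed
  have Um: "Uc c r k \<in> borel_measurable H"
  proof -
    have "Uc c r k = (\<lambda>(xs, t). h k (Suc c) r xs t) \<circ> Tm (Suc c) k" unfolding Uc_def[abs_def] Tm_def by (simp add: comp_def)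
    moreover have "(\<lambda>(xs, t). h k (Suc c) r xs t) \<circ> Tm (Suc c) k \<in> borel_measurable (P {..<Suc c + 1 + r})"
      by (rule measurable_comp[OF Tm_meas[OF k] h_meas[OF k r]])
    ultimately show ?thesis unfolding H_def J_def by simp
  qed
  have lists: "map \<omega> [0..<j] \<in> lists (space M)" if "\<omega> \<in> space H" "j \<le> Suc c" for \<omega> j
    using that unfolding H_def space_P J_def by (intro map_in_lists) auto
  have bW: "\<bar>Wc c r k \<omega>\<bar> \<le> 1" if "\<omega> \<in> space H" for \<omega>
    unfolding Wc_def by (rule h_bnd_abs[OF k r lists[OF that]]) simp_all
  have bU: "\<bar>Uc c r k \<omega>\<bar> \<le> 1" if "\<omega> \<in> space H" for \<omega>
    unfolding Uc_def by (rule h_bnd_abs[OF k r lists[OF that]]) simp_all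
  have fin: "finite_measure H" unfolding H_def using prob_P by (rule prob_space.finite_measure)
  have int: "integrable H (\<lambda>\<omega>. (Wc c r k \<omega> - Uc c r k \<omega>)\<^sup>2)"
  proof (rule bnd_int[OF fin, where B=4])
    show "(\<lambda>\<omega>. (Wc c r k \<omega> - Uc c r k \<omega>)\<^sup>2) \<in> borel_measurable H" using Wm Um by measurable
    fix \<omega> assume \<omega>: "\<omega> \<in> space H"
    have "\<bar>Wc c r k \<omega> - Uc c r k \<omega>\<bar> \<le> 2" using bW[OF \<omega>] bU[OF \<omega>] by simp
    then have "\<bar>Wc c r k \<omega> - Uc c r k \<omega>\<bar>\<^sup>2 \<le> 2\<^sup>2" by (intro power_mono) auto
    then show "\<bar>(Wc c r k \<omega> - Uc c r k \<omega>)\<^sup>2\<bar> \<le> 4" by simp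
  qed
  have "(\<integral>\<omega>. (Wc c r k \<omega> - Uc c r k \<omega>)\<^sup>2 \<partial>H) = 0"
  proof -
    have "0 \<le> (\<integral>\<omega>. (Wc c r k \<omega> - Uc c r k \<omega>)\<^sup>2 \<partial>H)" by (rule integral_nonneg_AE) simp
    moreover have "\<not> 0 < (\<integral>\<omega>. (Wc c r k \<omega> - Uc c r k \<omega>)\<^sup>2 \<partial>H)" using ng unfolding H_def J_def .
    ultimately show ?thesis by linarith
  qed
  then have "AE \<omega> in H. (Wc c r k \<omega> - Uc c r k \<omega>)\<^sup>2 = 0"
    using integral_nonneg_eq_0_iff_AE[OF int] by simp
  then have aeH: "AE \<omega> in P J. Wc c r k \<omega> = Uc c r k \<omega>" unfolding H_def by simp
  have into: "tau (Suc c) 0 \<in> J \<rightarrow> UNIV" by simp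
  have ae1: "AE \<omega> in P UNIV. Wc c r k (\<lambda>q\<in>J. \<omega> (tau (Suc c) 0 q)) = Uc c r k (\<lambda>q\<in>J. \<omega> (tau (Suc c) 0 q))"
    by (rule AE_reindex[OF inj_tau into aeH])
  have s0: "0 < r" using r by simp
  have pw: "Wc c r k (\<lambda>q\<in>J. \<omega> (tau (Suc c) 0 q)) = h k c r (map \<omega> [2..<c + 2]) (\<phi> k (\<omega> 0))"
    "Uc c r k (\<lambda>q\<in>J. \<omega> (tau (Suc c) 0 q)) = h k (Suc c) r (map \<omega> [2..<Suc c + 2]) (\<phi> k (\<omega> 0))" for \<omega>
  proof -
    have e1: "(\<lambda>q\<in>J. \<omega> (tau (Suc c) 0 q)) (Suc c) = \<omega> 0" unfolding J_def by (rule tau_facts(1)[OF s0])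
    have e3: "map (\<lambda>q\<in>J. \<omega> (tau (Suc c) 0 q)) [0..<Suc c] = map \<omega> [2..<Suc c + 2]"
      unfolding J_def by (rule tau_facts(3)[OF s0])
    have e4: "map (\<lambda>q\<in>J. \<omega> (tau (Suc c) 0 q)) [0..<c] = map \<omega> [2..<c + 2]"
      unfolding J_def map_shift2 tau_def by (intro map_cong) auto
    show "Wc c r k (\<lambda>q\<in>J. \<omega> (tau (Suc c) 0 q)) = h k c r (map \<omega> [2..<c + 2]) (\<phi> k (\<omega> 0))"
      unfolding Wc_def e1 e4 ..
    show "Uc c r k (\<lambda>q\<in>J. \<omega> (tau (Suc c) 0 q)) = h k (Suc c) r (map \<omega> [2..<Suc c + 2]) (\<phi> k (\<omega> 0))"
      unfolding Uc_def e1 e3 ..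
  qed
  have ae2: "AE \<omega> in P UNIV. h k c r (map \<omega> [2..<c + 2]) (\<phi> k (\<omega> 0)) = h k (Suc c) r (map \<omega> [2..<Suc c + 2]) (\<phi> k (\<omega> 0))"
    using ae1 unfolding pw .
  have "AE \<omega> in P UNIV. real_cond_exp (P UNIV) (cond_sigma M Prior (\<phi> k) c) (indicator {\<omega>. \<phi> k (\<omega> 1) \<le> \<phi> k (\<omega> 0)}) \<omega>
      = real_cond_exp (P UNIV) (cond_sigma M Prior (\<phi> k) (Suc c)) (indicator {\<omega>. \<phi> k (\<omega> 1) \<le> \<phi> k (\<omega> 0)}) \<omega>"
    using claimA[OF k r, of c] claimA[OF k r, of "Suc c"] ae2 by eventually_elim simp
  then have "degenerate M Prior (\<phi> k)" unfolding degenerate_def seq_space_P by blast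
  then show False using nd by simp
qed

end

theorem theorem2:
  fixes M :: "'a measure" and Prior :: "'a measure measure" and K m :: nat
    and \<phi> :: "nat \<Rightarrow> 'a \<Rightarrow> real"
    and h :: "nat \<Rightarrow> nat \<Rightarrow> nat \<Rightarrow> 'a list \<Rightarrow> real \<Rightarrow> real"
  assumes prior: "Prior \<in> space (prob_algebra (prob_algebra M))"
    and agents: "2 \<le> m"
    and features: "\<forall>k<K. \<phi> k \<in> borel_measurable M"
    and hyp_h: "valid_h M Prior K \<phi> h"
  shows "(\<forall>n i f. i < m \<longrightarrow> 2 \<le> (\<Sum>j\<in>{..<m} - {i}. n j) \<longrightarrow>
            f \<in> listM M \<rightarrow>\<^sub>M listM M \<longrightarrow>
            expected_loss Prior K \<phi> h m (\<lambda>_. id) n i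
              \<le> expected_loss Prior K \<phi> h m ((\<lambda>_. id)(i := f)) n i)
       \<and> ((\<exists>k<K. \<not> degenerate M Prior (\<phi> k)) \<longrightarrow>
          (\<forall>n i a b. i < m \<longrightarrow> 2 \<le> (\<Sum>j\<in>{..<m} - {i}. n j) \<longrightarrow> a < b \<longrightarrow>
            expected_loss Prior K \<phi> h m (\<lambda>_. id) (n(i := b)) i
              < expected_loss Prior K \<phi> h m (\<lambda>_. id) (n(i := a)) i))"
proof -
  interpret ms: main_setup M Prior K \<phi> h
    by unfold_locales (rule prior, rule features, rule hyp_h)
  have idu: "(\<lambda>_. id)(i := id) = (\<lambda>_::nat. (id :: 'a list \<Rightarrow> 'a list))" for i by auto
  have idm: "id \<in> listM M \<rightarrow>\<^sub>M listM M" by (rule measurable_ident)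
  have P1: "expected_loss Prior K \<phi> h m (\<lambda>_. id) n i \<le> expected_loss Prior K \<phi> h m ((\<lambda>_. id)(i := f)) n i"
    if i: "i < m" and N: "2 \<le> (\<Sum>j\<in>{..<m} - {i}. n j)" and f: "f \<in> listM M \<rightarrow>\<^sub>M listM M" for n i f
  proof -
    define N where "N = length (Lidx m n i)"
    have N2: "2 \<le> N" unfolding N_def length_Lidx using N .
    have r: "1 \<le> N - 1" using N2 by simp
    have "expected_loss Prior K \<phi> h m (\<lambda>_. id) n i = (1 / real K) * (\<Sum>k<K. ms.Lossk id (n i) (N - 1) k)"
      using ms.EL[OF i N_def[symmetric] N2 idm] unfolding idu .
    also have "\<dots> \<le> (1 / real K) * (\<Sum>k<K. ms.Lossk f (n i) (N - 1) k)"
      by (intro mult_left_mono sum_mono ms.part1[OF _ r f]) auto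
    also have "\<dots> = expected_loss Prior K \<phi> h m ((\<lambda>_. id)(i := f)) n i"
      using ms.EL[OF i N_def[symmetric] N2 f] ..
    finally show ?thesis .
  qed
  have P2: "expected_loss Prior K \<phi> h m (\<lambda>_. id) (n(i := b)) i < expected_loss Prior K \<phi> h m (\<lambda>_. id) (n(i := a)) i"
    if nd: "\<exists>k<K. \<not> degenerate M Prior (\<phi> k)" and i: "i < m" and N: "2 \<le> (\<Sum>j\<in>{..<m} - {i}. n j)"
      and ab: "a < b" for n i a b
  proof -
    obtain k0 where k0: "k0 < K" "\<not> degenerate M Prior (\<phi> k0)" using nd by blast
    define N where "N = length (Lidx m n i)"
    have N2: "2 \<le> N" unfolding N_def length_Lidx using N .
    have r: "1 \<le> N - 1" using N2 by simp
    have sumc: "(\<Sum>j\<in>{..<m} - {i}. (n(i := c)) j) = (\<Sum>j\<in>{..<m} - {i}. n j)" for c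
      by (intro sum.cong) auto
    have Nc: "length (Lidx m (n(i := c)) i) = N" for c unfolding N_def length_Lidx sumc ..
    define E where "E c = (1 / real K) * (\<Sum>k<K. ms.Lossk id c (N - 1) k)" for c
    have EL: "expected_loss Prior K \<phi> h m (\<lambda>_. id) (n(i := c)) i = E c" for c
      using ms.EL[OF i Nc N2 idm] unfolding idu E_def by simp
    have step: "E (Suc c) < E c" for c
    proof -
      define I where "I k = (\<integral>\<omega>. (ms.Wc c (N - 1) k \<omega> - ms.Uc c (N - 1) k \<omega>)\<^sup>2 \<partial>ms.P {..<Suc c + 1 + (N - 1)})" for k
      have eq: "ms.Lossk id c (N - 1) k = I k + ms.Lossk id (Suc c) (N - 1) k" if "k < K" for k
        unfolding I_def by (rule ms.step_eq[OF that r])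
      have Inn: "0 \<le> I k" for k unfolding I_def by (rule integral_nonneg_AE) simp
      have Ipos: "0 < I k0" unfolding I_def by (rule ms.strict_step[OF k0(1) r k0(2)])
      have "(\<Sum>k<K. I k) > 0"
      proof -
        have "I k0 \<le> (\<Sum>k<K. I k)" using k0(1) Inn by (intro member_le_sum) auto
        then show ?thesis using Ipos by simp
      qed
      moreover have "(\<Sum>k<K. ms.Lossk id c (N - 1) k) = (\<Sum>k<K. I k) + (\<Sum>k<K. ms.Lossk id (Suc c) (N - 1) k)"
        using eq by (simp add: sum.distrib)
      ultimately have "(\<Sum>k<K. ms.Lossk id (Suc c) (N - 1) k) < (\<Sum>k<K. ms.Lossk id c (N - 1) k)" by simp
      moreover have "0 < 1 / real K" using k0(1) by simp
      ultimately show ?thesis unfolding E_def by (rule mult_strict_left_mono)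
    qed
    have "(\<lambda>c. - E c) a < (\<lambda>c. - E c) b"
      by (rule lift_Suc_mono_less[of "\<lambda>c. - E c"]) (use step ab in auto)
    then show ?thesis unfolding EL by simp
  qed
  show ?thesis using P1 P2 by blast
qed

end
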